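(* Let $L \in K[D]$ with $\operatorname{ord}(L)=d$ and $\operatorname{Sym}_L=S_1S_2$, where $S_1,S_2$ are homogeneous of degrees $d_1,d_2$, and let $S_0=\gcd(S_1,S_2)$ have degree $d_0$. Let $t$ be an integer with $1\le t\le d-d_0$, and let $F_1\circ F_2$ be a partial factorization of $L$ of order $t$ and type $(S_1)(S_2)$. Then there is at most one, up to lower order terms, extension of $F_1\circ F_2$ to a partial factorization of order $t-1$ of the same type. That is: if $F_1'\circ F_2'$ and $F_1''\circ F_2''$ are partial factorizations of $L$ of order $t-1$ and type $(S_1)(S_2)$, both extensions of $F_1\circ F_2$, then $\operatorname{ord}(F_i'-F_i'')<(t-1)-(d-d_i)$ for $i=1,2$.
   Context: $K$ is a field with commuting derivations $\partial_1,\dots,\partial_n$, and $K[D]=K[D_1,\dots,D_n]$ is the ring of linear differential operators over $K$: the $D_i$ commute with each other and $D_i\circ a=aD_i+\partial_i(a)$ for $a\in K$. Every $L\in K[D]$ is uniquely $\sum_{|J|\le d}a_JD^J$ with $a_J\in K$ and $D^J=D_1^{j_1}\cdots D_n^{j_n}$. The order $\operatorname{ord}(L)$ is the largest $|J|=j_1+\dots+j_n$ with $a_J\ne0$, and $\operatorname{ord}(0)=-\infty$. The symbol $\operatorname{Sym}_L=\sum_{|J|=\operatorname{ord}L}a_JX^J\in K[X_1,\dots,X_n]$. For $t\in\{0,\dots,\operatorname{ord}L\}$, a partial factorization of $L$ of order $t$ and type $(S_1)(S_2)$ is a composition $F_1\circ F_2$ with $\operatorname{Sym}_{F_i}=S_i$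 and $\operatorname{ord}(L-F_1\circ F_2)<t$. If $F_1\circ F_2$ and $F_1'\circ F_2'$ are partial factorizations of orders $t$ and $t'<t$, the latter is an extension of the former if $\operatorname{ord}(F_i-F_i')<t-(d-d_i)$ for $i=1,2$, where $d=\operatorname{ord}L$ and $d_i=\deg S_i$. *)

theory Defs
  imports Complex_Main "HOL-Library.Extended_Real"
begin

text \<open>Multi-indices J = (j_1,...,j_n) are functions nat => nat vanishing outside {0..<n}.
 Operators sum a_J D^J and polynomials sum a_J X^J are both represented by their
 coefficient functions (nat => nat) => 'k with finite support.\<close>

definition mdeg :: "nat \<Rightarrow> (nat \<Rightarrow> nat) \<Rightarrow> nat" where
  "mdeg n J = (\<Sum>i<n. J i)"

definition is_mindex :: "nat \<Rightarrow> (nat \<Rightarrow> nat) \<Rightarrow> bool" where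
  "is_mindex n J \<longleftrightarrow> (\<forall>i\<ge>n. J i = 0)"

definition supp :: "((nat \<Rightarrow> nat) \<Rightarrow> 'k::zero) \<Rightarrow> (nat \<Rightarrow> nat) set" where
  "supp L = {J. L J \<noteq> 0}"

definition is_op :: "nat \<Rightarrow> ((nat \<Rightarrow> nat) \<Rightarrow> 'k::zero) \<Rightarrow> bool" where
  "is_op n L \<longleftrightarrow> finite (supp L) \<and> (\<forall>J\<in>supp L. is_mindex n J)"

definition is_mpoly :: "nat \<Rightarrow> ((nat \<Rightarrow> nat) \<Rightarrow> 'k::zero) \<Rightarrow> bool" where
  "is_mpoly n P \<longleftrightarrow> finite (supp P) \<and> (\<forall>J\<in>supp P. is_mindex n J)"

definition is_derivation :: "('k::field \<Rightarrow> 'k) \<Rightarrow> bool" where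
  "is_derivation \<delta> \<longleftrightarrow> (\<forall>a b. \<delta> (a + b) = \<delta> a + \<delta> b) \<and> (\<forall>a b. \<delta> (a * b) = a * \<delta> b + \<delta> a * b)"

definition commuting_derivations :: "nat \<Rightarrow> (nat \<Rightarrow> 'k::field \<Rightarrow> 'k) \<Rightarrow> bool" where
  "commuting_derivations n \<delta> \<longleftrightarrow> (\<forall>i<n. is_derivation (\<delta> i)) \<and>
     (\<forall>i<n. \<forall>j<n. \<forall>a. \<delta> i (\<delta> j a) = \<delta> j (\<delta> i a))"

text \<open>\<partial>^K = \<partial>_1^{k_1} ... \<partial>_n^{k_n} (indices shifted to start at 0).\<close>
fun dpow :: "(nat \<Rightarrow> 'k \<Rightarrow> 'k) \<Rightarrow> nat \<Rightarrow> (nat \<Rightarrow> nat) \<Rightarrow> 'k \<Rightarrow> 'k" where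
  "dpow \<delta> 0 K a = a"
| "dpow \<delta> (Suc m) K a = (\<delta> m ^^ K m) (dpow \<delta> m K a)"

definition mbinom :: "nat \<Rightarrow> (nat \<Rightarrow> nat) \<Rightarrow> (nat \<Rightarrow> nat) \<Rightarrow> nat" where
  "mbinom n I K = (\<Prod>i<n. I i choose K i)"

text \<open>Composition in K[D]:
  (a D^I) o (b D^J) = sum_{K <= I} binom(I,K) a \<partial>^K(b) D^{I-K+J}.\<close>
definition op_comp :: "(nat \<Rightarrow> 'k::field \<Rightarrow> 'k) \<Rightarrow> nat \<Rightarrow> ((nat \<Rightarrow> nat) \<Rightarrow> 'k)
    \<Rightarrow> ((nat \<Rightarrow> nat) \<Rightarrow> 'k) \<Rightarrow> ((nat \<Rightarrow> nat) \<Rightarrow> 'k)" where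
  "op_comp \<delta> n L M = (\<lambda>P. \<Sum>I\<in>supp L. \<Sum>J\<in>supp M.
      \<Sum>K\<in>{K. is_mindex n K \<and> (\<forall>i<n. K i \<le> I i) \<and> (\<lambda>i. I i - K i + J i) = P}.
         of_nat (mbinom n I K) * L I * dpow \<delta> n K (M J))"

definition op_minus :: "((nat \<Rightarrow> nat) \<Rightarrow> 'k::ab_group_add) \<Rightarrow> ((nat \<Rightarrow> nat) \<Rightarrow> 'k) \<Rightarrow> ((nat \<Rightarrow> nat) \<Rightarrow> 'k)" where
  "op_minus L M = (\<lambda>J. L J - M J)"

definition ord :: "nat \<Rightarrow> ((nat \<Rightarrow> nat) \<Rightarrow> 'k::zero) \<Rightarrow> ereal" where
  "ord n L = (if supp L = {} then -\<infinity> else ereal (real (Max (mdeg n ` supp L))))"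

definition Sym :: "nat \<Rightarrow> ((nat \<Rightarrow> nat) \<Rightarrow> 'k::zero) \<Rightarrow> ((nat \<Rightarrow> nat) \<Rightarrow> 'k)" where
  "Sym n L = (\<lambda>J. if ereal (real (mdeg n J)) = ord n L then L J else 0)"

definition pmult :: "((nat \<Rightarrow> nat) \<Rightarrow> 'k::comm_ring) \<Rightarrow> ((nat \<Rightarrow> nat) \<Rightarrow> 'k) \<Rightarrow> ((nat \<Rightarrow> nat) \<Rightarrow> 'k)" where
  "pmult P Q = (\<lambda>M. \<Sum>I\<in>supp P. \<Sum>J\<in>supp Q. if (\<lambda>i. I i + J i) = M then P I * Q J else 0)"

definition homogeneous :: "nat \<Rightarrow> ((nat \<Rightarrow> nat) \<Rightarrow> 'k::zero) \<Rightarrow> nat \<Rightarrow> bool" where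
  "homogeneous n P d \<longleftrightarrow> (\<forall>J\<in>supp P. mdeg n J = d)"

text \<open>Total degree of a nonzero polynomial.\<close>
definition pdeg :: "nat \<Rightarrow> ((nat \<Rightarrow> nat) \<Rightarrow> 'k::zero) \<Rightarrow> nat" where
  "pdeg n P = Max (mdeg n ` supp P)"

definition pdvd :: "nat \<Rightarrow> ((nat \<Rightarrow> nat) \<Rightarrow> 'k::comm_ring) \<Rightarrow> ((nat \<Rightarrow> nat) \<Rightarrow> 'k) \<Rightarrow> bool" where
  "pdvd n P Q \<longleftrightarrow> (\<exists>R. is_mpoly n R \<and> Q = pmult P R)"

definition is_gcd :: "nat \<Rightarrow> ((nat \<Rightarrow> nat) \<Rightarrow> 'k::comm_ring) \<Rightarrow> ((nat \<Rightarrow> nat) \<Rightarrow> 'k) \<Rightarrow> ((nat \<Rightarrow> nat) \<Rightarrow> 'k) \<Rightarrow> bool" where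
  "is_gcd n G P Q \<longleftrightarrow> is_mpoly n G \<and> pdvd n G P \<and> pdvd n G Q \<and>
     (\<forall>H. is_mpoly n H \<and> pdvd n H P \<and> pdvd n H Q \<longrightarrow> pdvd n H G)"

definition partial_factorization :: "(nat \<Rightarrow> 'k::field \<Rightarrow> 'k) \<Rightarrow> nat \<Rightarrow> ((nat \<Rightarrow> nat) \<Rightarrow> 'k) \<Rightarrow> int
   \<Rightarrow> ((nat \<Rightarrow> nat) \<Rightarrow> 'k) \<Rightarrow> ((nat \<Rightarrow> nat) \<Rightarrow> 'k) \<Rightarrow> ((nat \<Rightarrow> nat) \<Rightarrow> 'k) \<Rightarrow> ((nat \<Rightarrow> nat) \<Rightarrow> 'k) \<Rightarrow> bool" where
  "partial_factorization \<delta> n L t S1 S2 F1 F2 \<longleftrightarrow>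
     0 \<le> t \<and> ereal (real_of_int t) \<le> ord n L \<and>
     is_op n F1 \<and> is_op n F2 \<and> Sym n F1 = S1 \<and> Sym n F2 = S2 \<and>
     ord n (op_minus L (op_comp \<delta> n F1 F2)) < ereal (real_of_int t)"

text \<open>F1' o F2' (order t') is an extension of F1 o F2 (order t), where d = ord L,
  d1 = deg S1, d2 = deg S2.\<close>
definition is_extension :: "nat \<Rightarrow> nat \<Rightarrow> nat \<Rightarrow> nat \<Rightarrow> int \<Rightarrow> ((nat \<Rightarrow> nat) \<Rightarrow> 'k::ab_group_add)
   \<Rightarrow> ((nat \<Rightarrow> nat) \<Rightarrow> 'k) \<Rightarrow> int \<Rightarrow> ((nat \<Rightarrow> nat) \<Rightarrow> 'k) \<Rightarrow> ((nat \<Rightarrow> nat) \<Rightarrow> 'k) \<Rightarrow> bool" where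
  "is_extension n d d1 d2 t F1 F2 t' F1' F2' \<longleftrightarrow> t' < t \<and>
     ord n (op_minus F1 F1') < ereal (real_of_int (t - (int d - int d1))) \<and>
     ord n (op_minus F2 F2') < ereal (real_of_int (t - (int d - int d2)))"

end

theory Submission imports Defs "HOL-Library.Poly_Mapping" "HOL-Computational_Algebra.Polynomial" begin

type_synonym mono = "nat \<Rightarrow>\<^sub>0 nat"
type_synonym 'k U = "mono \<Rightarrow>\<^sub>0 'k"

abbreviation lk where "lk \<equiv> Poly_Mapping.lookup"
abbreviation ks where "ks \<equiv> Poly_Mapping.keys"
abbreviation sg where "sg \<equiv> Poly_Mapping.single"

definition wsum :: "(nat \<Rightarrow> bool) \<Rightarrow> mono \<Rightarrow> nat" where
  "wsum S M = (\<Sum>i\<in>ks M. if S i then lk M i else 0)"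

lemma keys_add_nat: "ks ((a::mono) + b) = ks a \<union> ks b"
  by (auto simp: in_keys_iff Poly_Mapping.lookup_add)

lemma wsum_add: "wsum S (a + b) = wsum S a + wsum S b"
proof -
  have fin: "finite (ks a \<union> ks b)" by simp
  have "wsum S (a+b) = (\<Sum>i\<in>ks a \<union> ks b. if S i then lk a i + lk b i else 0)"
    unfolding wsum_def keys_add_nat by (simp add: Poly_Mapping.lookup_add cong: if_cong)
  also have "\<dots> = (\<Sum>i\<in>ks a \<union> ks b. if S i then lk a i else 0) + (\<Sum>i\<in>ks a \<union> ks b. if S i then lk b i else 0)"
    by (simp add: sum.distrib[symmetric] if_distrib cong: if_cong)
  also have "(\<Sum>i\<in>ks a \<union> ks b. if S i then lk a i else 0) = wsum S a"
    unfolding wsum_def by (rule sum.mono_neutral_right) (auto simp: in_keys_iff)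
  also have "(\<Sum>i\<in>ks a \<union> ks b. if S i then lk b i else 0) = wsum S b"
    unfolding wsum_def by (rule sum.mono_neutral_right) (auto simp: in_keys_iff)
  finally show ?thesis .
qed

lemma wsum_zero_iff: "wsum S M = 0 \<longleftrightarrow> (\<forall>i\<in>ks M. \<not> S i)"
  unfolding wsum_def by (auto simp: in_keys_iff)

definition wdeg :: "(mono \<Rightarrow> nat) \<Rightarrow> 'k::zero U \<Rightarrow> nat" where
  "wdeg w p = Max (w ` ks p)"

lemma wdeg_ge: "M \<in> ks p \<Longrightarrow> w M \<le> wdeg w p"
  unfolding wdeg_def by (rule Max_ge) auto

lemma wdeg_attained: "p \<noteq> 0 \<Longrightarrow> \<exists>M\<in>ks p. w M = wdeg w p"
proof -
  assume "p \<noteq> 0"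
  hence "ks p \<noteq> {}" by simp
  hence "Max (w ` ks p) \<in> w ` ks p" by (intro Max_in) auto
  thus ?thesis unfolding wdeg_def by auto
qed

definition wtop :: "(mono \<Rightarrow> nat) \<Rightarrow> 'k::zero U \<Rightarrow> 'k U" where
  "wtop w p = Abs_poly_mapping (\<lambda>M. if w M = wdeg w p then lk p M else 0)"

lemma lookup_wtop: "lk (wtop w p) M = (if w M = wdeg w p then lk p M else 0)"
proof -
  have "finite {M. (if w M = wdeg w p then lk p M else 0) \<noteq> 0}"
    by (rule finite_subset[of _ "ks p"]) (auto simp: in_keys_iff)
  thus ?thesis unfolding wtop_def by simp
qed

lemma wdeg_mult:
  fixes p q :: "'k::idom U"
  assumes add: "\<And>a b. w (a + b) = w a + w b" and p: "p \<noteq> 0" and q: "q \<noteq> 0"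
  shows "wdeg w (p * q) = wdeg w p + wdeg w q"
proof -
  define mp where "mp = wdeg w p"
  define mq where "mq = wdeg w q"
  define P1 where "P1 = wtop w p"
  define Q1 where "Q1 = wtop w q"
  define P2 where "P2 = p - P1"
  define Q2 where "Q2 = q - Q1"
  have kP1: "M \<in> ks P1 \<Longrightarrow> w M = mp" for M
    by (auto simp: P1_def mp_def in_keys_iff lookup_wtop split: if_splits)
  have kQ1: "M \<in> ks Q1 \<Longrightarrow> w M = mq" for M
    by (auto simp: Q1_def mq_def in_keys_iff lookup_wtop split: if_splits)
  have kP2: "M \<in> ks P2 \<Longrightarrow> w M < mp" for M
  proof -
    assume "M \<in> ks P2"
    hence "lk p M \<noteq> 0" "w M \<noteq> mp"
      by (auto simp: P2_def P1_def mp_def in_keys_iff lookup_wtop Poly_Mapping.lookup_minus split: if_splits)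
    moreover have "w M \<le> mp" using wdeg_ge[of M p w] \<open>lk p M \<noteq> 0\<close> by (auto simp: mp_def in_keys_iff)
    ultimately show ?thesis by simp
  qed
  have kQ2: "M \<in> ks Q2 \<Longrightarrow> w M < mq" for M
  proof -
    assume "M \<in> ks Q2"
    hence "lk q M \<noteq> 0" "w M \<noteq> mq"
      by (auto simp: Q2_def Q1_def mq_def in_keys_iff lookup_wtop Poly_Mapping.lookup_minus split: if_splits)
    moreover have "w M \<le> mq" using wdeg_ge[of M q w] \<open>lk q M \<noteq> 0\<close> by (auto simp: mq_def in_keys_iff)
    ultimately show ?thesis by simp
  qed
  have P1nz: "P1 \<noteq> 0"
  proof -
    obtain M where "M \<in> ks p" "w M = mp" using wdeg_attained[OF p] mp_def by blast
    hence "lk P1 M \<noteq> 0" by (simp add: P1_def lookup_wtop mp_def in_keys_iff)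
    thus ?thesis by auto
  qed
  have Q1nz: "Q1 \<noteq> 0"
  proof -
    obtain M where "M \<in> ks q" "w M = mq" using wdeg_attained[OF q] mq_def by blast
    hence "lk Q1 M \<noteq> 0" by (simp add: Q1_def lookup_wtop mq_def in_keys_iff)
    thus ?thesis by auto
  qed
  define R where "R = P1 * Q2 + P2 * Q1 + P2 * Q2"
  have pq: "p * q = P1 * Q1 + R"
  proof -
    have "p * q = (P1 + P2) * (Q1 + Q2)" by (simp add: P2_def Q2_def)
    also have "\<dots> = P1*Q1 + R" unfolding R_def by (simp add: distrib_left distrib_right add_ac)
    finally show ?thesis .
  qed
  have kR: "M \<in> ks R \<Longrightarrow> w M < mp + mq" for M
  proof -
    assume M: "M \<in> ks R"
    have "M \<in> ks (P1 * Q2) \<union> ks (P2 * Q1) \<union> ks (P2 * Q2)"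
      using M keys_add[of "P1 * Q2 + P2 * Q1" "P2 * Q2"] keys_add[of "P1 * Q2" "P2 * Q1"] unfolding R_def by blast
    thus ?thesis
    proof (elim UnE)
      assume "M \<in> ks (P1 * Q2)"
      then obtain a b where "a \<in> ks P1" "b \<in> ks Q2" "M = a + b" using keys_mult[of P1 Q2] by blast
      thus ?thesis using kP1[of a] kQ2[of b] add[of a b] by simp
    next
      assume "M \<in> ks (P2 * Q1)"
      then obtain a b where "a \<in> ks P2" "b \<in> ks Q1" "M = a + b" using keys_mult[of P2 Q1] by blast
      thus ?thesis using kP2[of a] kQ1[of b] add[of a b] by simp
    next
      assume "M \<in> ks (P2 * Q2)"
      then obtain a b where "a \<in> ks P2" "b \<in> ks Q2" "M = a + b" using keys_mult[of P2 Q2] by blast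
      thus ?thesis using kP2[of a] kQ2[of b] add[of a b] by simp
    qed
  qed
  have k11: "M \<in> ks (P1 * Q1) \<Longrightarrow> w M = mp + mq" for M
  proof -
    assume "M \<in> ks (P1 * Q1)"
    then obtain a b where "a \<in> ks P1" "b \<in> ks Q1" "M = a + b" using keys_mult[of P1 Q1] by blast
    thus ?thesis using kP1[of a] kQ1[of b] add[of a b] by simp
  qed
  have "P1 * Q1 \<noteq> 0" using P1nz Q1nz by simp
  then obtain M0 where M0: "M0 \<in> ks (P1 * Q1)" by (metis all_not_in_conv keys_eq_empty)
  have "M0 \<notin> ks R" using kR k11[OF M0] by fastforce
  hence "lk (p*q) M0 \<noteq> 0" using M0 by (simp add: pq Poly_Mapping.lookup_add in_keys_iff)
  hence M0in: "M0 \<in> ks (p*q)" by (simp add: in_keys_iff)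
  have le: "\<And>M. M \<in> ks (p*q) \<Longrightarrow> w M \<le> mp + mq"
  proof -
    fix M assume "M \<in> ks (p*q)"
    hence "M \<in> ks (P1*Q1) \<or> M \<in> ks R" using keys_add[of "P1*Q1" R] pq by auto
    thus "w M \<le> mp + mq" using kR k11 by fastforce
  qed
  show ?thesis unfolding wdeg_def[of w "p*q"] mp_def[symmetric] mq_def[symmetric]
  proof (rule Max_eqI)
    show "finite (w ` ks (p*q))" by simp
    show "y \<in> w ` ks (p * q) \<Longrightarrow> y \<le> mp + mq" for y using le by auto
    show "mp + mq \<in> w ` ks (p * q)" using M0in k11[OF M0] by (metis image_eqI)
  qed
qed

definition wout :: "nat \<Rightarrow> mono \<Rightarrow> nat" where "wout n = wsum (\<lambda>i. n \<le> i)"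
definition wtot :: "mono \<Rightarrow> nat" where "wtot = wsum (\<lambda>i. True)"
definition tdeg :: "'k::zero U \<Rightarrow> nat" where "tdeg p = wdeg wtot p"
definition inR :: "nat \<Rightarrow> 'k::zero U \<Rightarrow> bool" where "inR n p \<longleftrightarrow> (\<forall>M\<in>ks p. \<forall>i\<in>ks M. i < n)"

lemma wout_add: "wout n (a + b) = wout n a + wout n b" by (simp add: wout_def wsum_add)
lemma wtot_add: "wtot (a + b) = wtot a + wtot b" by (simp add: wtot_def wsum_add)

lemma inR_wout: "inR n p \<longleftrightarrow> (\<forall>M\<in>ks p. wout n M = 0)"
  by (auto simp: inR_def wout_def wsum_zero_iff not_le)

lemma wtot_zero: "wtot M = 0 \<longleftrightarrow> M = 0"
  by (simp add: wtot_def wsum_zero_iff)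

lemma wdeg_zero_iff: "(p::'k::zero U) \<noteq> 0 \<Longrightarrow> wdeg w p = 0 \<longleftrightarrow> (\<forall>M\<in>ks p. w M = 0)"
proof
  assume "p \<noteq> 0" "wdeg w p = 0"
  thus "\<forall>M\<in>ks p. w M = 0" using wdeg_ge[of _ p w] by fastforce
next
  assume "p \<noteq> 0" "\<forall>M\<in>ks p. w M = 0"
  thus "wdeg w p = 0" using wdeg_attained[of p w] by force
qed

lemma divR:
  fixes a b c :: "'k::idom U"
  assumes "a * b = c" "c \<noteq> 0" "inR n c" shows "inR n a"
proof -
  have "a \<noteq> 0" "b \<noteq> 0" using assms by auto
  hence "wdeg (wout n) c = wdeg (wout n) a + wdeg (wout n) b"
    using wdeg_mult[of "wout n" a b] wout_add assms(1) by blast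
  moreover have "wdeg (wout n) c = 0" using assms(2,3) by (simp add: wdeg_zero_iff inR_wout)
  ultimately have "wdeg (wout n) a = 0" by simp
  thus ?thesis using \<open>a \<noteq> 0\<close> by (simp add: wdeg_zero_iff inR_wout)
qed

lemma divR2:
  fixes a b c :: "'k::idom U"
  assumes "a * b = c" "c \<noteq> 0" "inR n c" shows "inR n b"
  using divR[of b a c n] assms by (simp add: mult.commute)

lemma dvdR: "(a::'k::idom U) dvd c \<Longrightarrow> c \<noteq> 0 \<Longrightarrow> inR n c \<Longrightarrow> inR n a"
  by (metis dvdE divR)

lemma tdeg_mult: "(p::'k::idom U) \<noteq> 0 \<Longrightarrow> q \<noteq> 0 \<Longrightarrow> tdeg (p*q) = tdeg p + tdeg q"
  unfolding tdeg_def by (rule wdeg_mult) (simp_all add: wtot_add)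

lemma tdeg_one: "tdeg (1::'k::{zero_neq_one} U) = 0"
  by (simp add: tdeg_def wdeg_def wtot_zero)

lemma tdeg_zero_const:
  assumes "(p::'k::zero U) \<noteq> 0" "tdeg p = 0" shows "p = sg 0 (lk p 0)"
proof -
  have "\<forall>M\<in>ks p. M = 0" using assms by (simp add: tdeg_def wdeg_zero_iff wtot_zero)
  thus ?thesis
    by (intro poly_mapping_eqI) (auto simp: Poly_Mapping.lookup_single when_def in_keys_iff)
qed

lemma const_unit: "(c::'k::field) \<noteq> 0 \<Longrightarrow> (sg 0 c) dvd 1"
proof -
  assume "c \<noteq> 0"
  hence "sg 0 c * sg 0 (inverse c) = 1" by (simp add: mult_single)
  thus ?thesis by (metis dvdI)
qed

lemma unit_iff: "(p::'k::field U) dvd 1 \<longleftrightarrow> p \<noteq> 0 \<and> tdeg p = 0"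
proof
  assume "p dvd 1"
  then obtain q where "1 = p * q" by (rule dvdE)
  hence "p \<noteq> 0" "q \<noteq> 0" by auto
  moreover have "tdeg p + tdeg q = 0" using tdeg_mult[OF \<open>p\<noteq>0\<close> \<open>q\<noteq>0\<close>] \<open>1 = p * q\<close> tdeg_one by metis
  ultimately show "p \<noteq> 0 \<and> tdeg p = 0" by simp
next
  assume a: "p \<noteq> 0 \<and> tdeg p = 0"
  hence "p = sg 0 (lk p 0)" using tdeg_zero_const by blast
  moreover have "lk p 0 \<noteq> 0" using a calculation by (metis single_zero)
  ultimately show "p dvd 1" using const_unit by metis
qed

lemma keys_diff_sub: "ks (a - b) \<subseteq> ks a \<union> ks (b::'k::ab_group_add U)"
  by (auto simp: in_keys_iff Poly_Mapping.lookup_minus)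

lemma keys_uminus: "ks (- a) = ks (a::'k::ab_group_add U)"
  by (auto simp: in_keys_iff)

lemma inR_add: "inR n a \<Longrightarrow> inR n b \<Longrightarrow> inR n (a + b)"
  unfolding inR_def using keys_add[of a b] by blast
lemma inR_diff: "inR n a \<Longrightarrow> inR n b \<Longrightarrow> inR n (a - (b::'k::ab_group_add U))"
  unfolding inR_def using keys_diff_sub[of a b] by blast
lemma inR_uminus: "inR n a \<Longrightarrow> inR n (- (a::'k::ab_group_add U))"
  unfolding inR_def by (simp add: keys_uminus)
lemma inR_zero: "inR n 0" by (simp add: inR_def)
lemma inR_const: "inR n (sg 0 c)" by (simp add: inR_def)
lemma inR_one: "inR n (1::'k::zero_neq_one U)" by (simp add: inR_def)
lemma inR_mult: "inR n a \<Longrightarrow> inR n b \<Longrightarrow> inR n (a * (b::'k::comm_ring_1 U))"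
proof -
  assume a: "inR n a" and b: "inR n b"
  show ?thesis unfolding inR_def
  proof (intro ballI)
    fix M i assume "M \<in> ks (a*b)" "i \<in> ks M"
    then obtain x y where "x \<in> ks a" "y \<in> ks b" "M = x + y" using keys_mult[of a b] by blast
    hence "i \<in> ks x \<or> i \<in> ks y" using \<open>i \<in> ks M\<close> keys_add_nat[of x y] by blast
    thus "i < n" using a b \<open>x \<in> ks a\<close> \<open>y \<in> ks b\<close> unfolding inR_def by blast
  qed
qed
lemma inR_sum: "(\<And>x. x \<in> A \<Longrightarrow> inR n (f x)) \<Longrightarrow> inR n (sum f A)"
  by (induction A rule: infinite_finite_induct) (auto intro: inR_add inR_zero)
lemma inR_mono: "inR n p \<Longrightarrow> n \<le> m \<Longrightarrow> inR m p"
  unfolding inR_def by fastforce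
lemma inR_power: "inR n a \<Longrightarrow> inR n (a ^ k :: 'k::comm_ring_1 U)"
  by (induction k) (auto intro: inR_mult inR_one)

lemma irred_divisor:
  fixes x :: "'k::field U"
  shows "x \<noteq> 0 \<Longrightarrow> \<not> x dvd 1 \<Longrightarrow> \<exists>p. irreducible p \<and> p dvd x"
proof (induction "tdeg x" arbitrary: x rule: less_induct)
  case less
  show ?case
  proof (cases "irreducible x")
    case True thus ?thesis by (intro exI[of _ x]) simp
  next
    case False
    then obtain a b where ab: "x = a * b" "\<not> a dvd 1" "\<not> b dvd 1"
      using less.prems unfolding irreducible_def by auto
    hence "a \<noteq> 0" "b \<noteq> 0" using less.prems by auto
    hence "tdeg b \<noteq> 0" using ab(3) by (simp add: unit_iff)
    hence "tdeg a < tdeg x" using ab tdeg_mult[OF \<open>a \<noteq> 0\<close> \<open>b \<noteq> 0\<close>] by simp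
    then obtain p where "irreducible p" "p dvd a" using less.hyps[of a] \<open>a\<noteq>0\<close> ab(2) by auto
    moreover have "p dvd x" using \<open>p dvd a\<close> ab(1) by simp
    ultimately show ?thesis by auto
  qed
qed

definition xv :: "nat \<Rightarrow> 'k::comm_ring_1 U" where "xv n = sg (sg n 1) 1"
definition psi :: "nat \<Rightarrow> 'k::comm_ring_1 U poly \<Rightarrow> 'k U" where "psi n X = poly X (xv n)"
definition Rc :: "nat \<Rightarrow> 'k::comm_ring_1 U poly \<Rightarrow> bool" where "Rc n X \<longleftrightarrow> (\<forall>k. inR n (coeff X k))"

lemma xv_power: "xv n ^ k = (sg (sg n k) 1 :: 'k::comm_ring_1 U)"
proof (induction k)
  case 0 thus ?case by simp
next
  case (Suc k)
  have "xv n ^ Suc k = xv n * xv n ^ k" by simp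
  also have "\<dots> = xv n * (sg (sg n k) 1 :: 'k U)" by (simp only: Suc.IH)
  also have "\<dots> = sg (sg n 1) 1 * (sg (sg n k) 1 :: 'k U)" by (simp only: xv_def)
  also have "\<dots> = sg (sg n (Suc k)) 1" by (simp add: mult_single single_add[symmetric])
  finally show ?case .
qed

lemma inR_xv_power: "inR (Suc n) (xv n ^ k :: 'k::comm_ring_1 U)"
  by (simp add: xv_power inR_def)

lemma psi_mult: "psi n (X * Y) = psi n X * psi n Y" by (simp add: psi_def)
lemma psi_add: "psi n (X + Y) = psi n X + psi n Y" by (simp add: psi_def)
lemma psi_diff: "psi n (X - Y) = psi n X - psi n Y" by (simp add: psi_def)
lemma psi_const: "psi n [:c:] = c" by (simp add: psi_def)
lemma psi_smult: "psi n (smult c X) = c * psi n X" by (simp add: psi_def)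
lemma psi_zero: "psi n 0 = 0" by (simp add: psi_def)
lemma psi_one: "psi n 1 = 1" by (simp add: psi_def)

lemma Rc_add: "Rc n X \<Longrightarrow> Rc n Y \<Longrightarrow> Rc n (X + Y)" by (simp add: Rc_def inR_add)
lemma Rc_diff: "Rc n X \<Longrightarrow> Rc n Y \<Longrightarrow> Rc n (X - Y)" by (simp add: Rc_def inR_diff)
lemma Rc_zero: "Rc n 0" by (simp add: Rc_def inR_zero)
lemma Rc_const: "inR n c \<Longrightarrow> Rc n [:c:]" by (simp add: Rc_def coeff_pCons inR_zero split: nat.splits)
lemma Rc_one: "Rc n 1" using Rc_const[OF inR_one] by (simp add: one_pCons)
lemma Rc_smult: "inR n c \<Longrightarrow> Rc n X \<Longrightarrow> Rc n (smult c X)" by (simp add: Rc_def inR_mult)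
lemma Rc_monom: "inR n c \<Longrightarrow> Rc n (monom c j)" by (simp add: Rc_def inR_zero)
lemma Rc_mult: "Rc n X \<Longrightarrow> Rc n Y \<Longrightarrow> Rc n (X * Y)"
  unfolding Rc_def coeff_mult by (blast intro: inR_sum inR_mult)
lemma Rc_sum: "(\<And>x. x \<in> A \<Longrightarrow> Rc n (f x)) \<Longrightarrow> Rc n (sum f A)"
  unfolding Rc_def coeff_sum by (blast intro: inR_sum)
lemma Rc_power: "Rc n X \<Longrightarrow> Rc n (X ^ k)"
  by (induction k) (auto intro: Rc_mult Rc_one)

lemma psi_inR: "Rc n X \<Longrightarrow> inR (Suc n) (psi n X)"
  unfolding psi_def poly_altdef Rc_def
  by (intro inR_sum inR_mult inR_xv_power) (auto intro: inR_mono)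

lemma keys_sum_sub: "M \<in> ks (sum f A) \<Longrightarrow> \<exists>i\<in>A. M \<in> ks (f i)"
proof (rule ccontr)
  assume "M \<in> ks (sum f A)" "\<not> (\<exists>i\<in>A. M \<in> ks (f i))"
  hence "lk (sum f A) M = 0" by (simp add: lookup_sum in_keys_iff)
  thus False using \<open>M \<in> ks (sum f A)\<close> by (simp add: in_keys_iff)
qed

lemma key_weight:
  assumes "inR n c" "M \<in> ks (c * xv n ^ k :: 'k::comm_ring_1 U)" shows "lk M n = k"
proof -
  obtain a b where ab: "a \<in> ks c" "b \<in> ks (xv n ^ k :: 'k U)" "M = a + b"
    using keys_mult[of c "xv n ^ k"] assms(2) by blast
  have "b = sg n k" using ab(2) by (simp add: xv_power split: if_splits)
  moreover have "lk a n = 0"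
  proof -
    have "\<forall>i\<in>ks a. i < n" using assms(1) ab(1) unfolding inR_def by blast
    hence "n \<notin> ks a" by blast
    thus ?thesis by (simp add: in_keys_iff)
  qed
  ultimately show ?thesis using ab(3) by (simp add: Poly_Mapping.lookup_add Poly_Mapping.lookup_single)
qed

lemma psi_inj0:
  fixes X :: "'k::field U poly"
  assumes "Rc n X" "psi n X = 0" shows "X = 0"
proof (rule ccontr)
  assume "X \<noteq> 0"
  define d where "d = degree X"
  define T where "T = coeff X d * xv n ^ d"
  have "coeff X d \<noteq> 0" using \<open>X \<noteq> 0\<close> by (simp add: d_def)
  moreover have "xv n ^ d \<noteq> (0::'k U)"
    by (simp add: xv_power) (metis Poly_Mapping.lookup_single_eq one_neq_zero lookup_zero)
  ultimately have "T \<noteq> 0" by (simp add: T_def)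
  then obtain M0 where M0: "M0 \<in> ks T" by (metis all_not_in_conv keys_eq_empty)
  have w0: "lk M0 n = d" using key_weight[of n "coeff X d" M0 d] assms(1) M0 by (simp add: Rc_def T_def)
  define S where "S = (\<Sum>i<d. coeff X i * xv n ^ i)"
  have "psi n X = S + T" unfolding psi_def poly_altdef S_def T_def d_def
    by (simp add: lessThan_Suc_atMost[symmetric])
  have "M0 \<notin> ks S"
  proof
    assume "M0 \<in> ks S"
    then obtain i where "i < d" "M0 \<in> ks (coeff X i * xv n ^ i)" unfolding S_def
      using keys_sum_sub[of M0 "\<lambda>i. coeff X i * xv n ^ i" "{..<d}"] by auto
    hence "lk M0 n = i" using key_weight[of n "coeff X i" M0 i] assms(1) by (simp add: Rc_def)
    thus False using w0 \<open>i < d\<close> by simp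
  qed
  hence "lk (psi n X) M0 \<noteq> 0" using M0 \<open>psi n X = S + T\<close> by (simp add: Poly_Mapping.lookup_add in_keys_iff)
  thus False using assms(2) by simp
qed

lemma psi_inj:
  fixes X Y :: "'k::field U poly"
  assumes "Rc n X" "Rc n Y" "psi n X = psi n Y" shows "X = Y"
  using psi_inj0[of n "X - Y"] assms by (simp add: Rc_diff psi_diff)

lemma pm_expand: "x = (\<Sum>M\<in>ks x. sg M (lk x M))"
  by (intro poly_mapping_eqI)
     (simp add: lookup_sum Poly_Mapping.lookup_single when_def in_keys_iff sum.delta' cong: if_cong)

lemma psi_surj:
  fixes x :: "'k::field U"
  assumes "inR (Suc n) x" shows "\<exists>X. Rc n X \<and> psi n X = x"
proof -
  define up where "up M = Poly_Mapping.update n 0 M" for M :: mono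
  define X where "X = (\<Sum>M\<in>ks x. monom (sg (up M) (lk x M)) (lk M n))"
  have inRup: "inR n (sg (up M) c)" if "M \<in> ks x" for M and c :: 'k
  proof -
    have a: "\<forall>i\<in>ks M. i < Suc n" using assms that unfolding inR_def by blast
    have "i < n" if "i \<in> ks (up M)" for i
    proof -
      have "i \<noteq> n" "i \<in> ks M" using that by (auto simp: up_def in_keys_iff Poly_Mapping.lookup_update split: if_splits)
      thus ?thesis using a by force
    qed
    thus ?thesis unfolding inR_def by (auto split: if_splits)
  qed
  have "Rc n X" unfolding X_def by (intro Rc_sum Rc_monom inRup)
  moreover have "psi n X = x"
  proof -
    have "psi n (monom (sg (up M) (lk x M)) (lk M n)) = sg M (lk x M)" for M
    proof -
      have "M = up M + sg n (lk M n)"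
        by (intro poly_mapping_eqI)
           (simp add: up_def Poly_Mapping.lookup_add Poly_Mapping.lookup_update Poly_Mapping.lookup_single when_def)
      hence "sg M (lk x M) = sg (up M) (lk x M) * sg (sg n (lk M n)) 1"
        by (simp add: mult_single)
      thus ?thesis by (simp add: psi_def xv_power poly_monom)
    qed
    hence "psi n X = (\<Sum>M\<in>ks x. sg M (lk x M))"
      unfolding X_def psi_def by (simp add: poly_sum)
    thus ?thesis using pm_expand[of x] by simp
  qed
  ultimately show ?thesis by blast
qed

definition rep :: "nat \<Rightarrow> 'k::field U \<Rightarrow> 'k U poly" where
  "rep n x = (SOME X. Rc n X \<and> psi n X = x)"

lemma rep: "inR (Suc n) x \<Longrightarrow> Rc n (rep n x) \<and> psi n (rep n x) = x"
  unfolding rep_def using psi_surj by (rule someI_ex)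

lemma psi_unit_deg:
  fixes X :: "'k::field U poly"
  assumes "Rc n X" "psi n X dvd 1" shows "degree X = 0"
proof -
  define u where "u = psi n X"
  have uu: "u \<noteq> 0 \<and> tdeg u = 0" unfolding u_def by (rule unit_iff[THEN iffD1, OF assms(2)])
  have "u \<noteq> 0" "tdeg u = 0" using uu by (rule conjunct1, rule conjunct2)
  hence "u = sg 0 (lk u 0)" by (rule tdeg_zero_const)
  hence "inR n u" using inR_const[of n "lk u 0"] by simp
  hence "Rc n [:u:]" by (rule Rc_const)
  moreover have "psi n X = psi n [:u:]" by (simp add: psi_const u_def)
  ultimately have "X = [:u:]" using psi_inj[of n X "[:u:]"] assms(1) by blast
  thus ?thesis by simp
qed

lemma smult_cancel: "smult (p::'k::field U) X = smult p Y \<Longrightarrow> p \<noteq> 0 \<Longrightarrow> X = Y"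
proof -
  assume "smult p X = smult p Y" "p \<noteq> 0"
  hence "[:p:] * X = [:p:] * Y" by simp
  moreover have "[:p:] \<noteq> 0" using \<open>p \<noteq> 0\<close> by simp
  ultimately show "X = Y" by (rule mult_left_cancel[THEN iffD1, rotated])
qed

lemma gauss:
  fixes A B :: "'k::field U poly"
  assumes IH: "\<And>f g h :: 'k U. inR n f \<Longrightarrow> inR n g \<Longrightarrow> inR n h \<Longrightarrow> irreducible f \<Longrightarrow> f dvd g * h \<Longrightarrow> f dvd g \<or> f dvd h"
    and p: "inR n p" "irreducible p" and AB: "Rc n A" "Rc n B" "[:p:] dvd A * B"
  shows "[:p:] dvd A \<or> [:p:] dvd B"
proof (rule ccontr)
  assume "\<not> ?thesis"
  hence ex: "\<exists>i. \<not> p dvd coeff A i" "\<exists>j. \<not> p dvd coeff B j" by (simp_all add: const_poly_dvd_iff)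
  define i where "i = (LEAST i. \<not> p dvd coeff A i)"
  define j where "j = (LEAST j. \<not> p dvd coeff B j)"
  have ni: "\<not> p dvd coeff A i" unfolding i_def using ex(1) by (rule LeastI_ex)
  have nj: "\<not> p dvd coeff B j" unfolding j_def using ex(2) by (rule LeastI_ex)
  have lti: "k < i \<Longrightarrow> p dvd coeff A k" for k unfolding i_def using not_less_Least by blast
  have ltj: "k < j \<Longrightarrow> p dvd coeff B k" for k unfolding j_def using not_less_Least by blast
  have all: "p dvd coeff (A*B) (i+j)" using AB(3) by (simp add: const_poly_dvd_iff)
  have split: "coeff (A*B) (i+j) = coeff A i * coeff B j + (\<Sum>k\<in>{..i+j} - {i}. coeff A k * coeff B (i+j-k))"
    unfolding coeff_mult by (subst sum.remove[of _ i]) auto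
  have "p dvd (\<Sum>k\<in>{..i+j} - {i}. coeff A k * coeff B (i+j-k))"
  proof (rule dvd_sum)
    fix k assume k: "k \<in> {..i+j} - {i}"
    show "p dvd coeff A k * coeff B (i+j-k)"
    proof (cases "k < i")
      case True thus ?thesis using lti by simp
    next
      case False hence "i+j-k < j" using k by auto
      thus ?thesis using ltj by simp
    qed
  qed
  hence "p dvd coeff A i * coeff B j" using all split by (simp add: dvd_add_left_iff)
  hence "p dvd coeff A i \<or> p dvd coeff B j"
    using IH[OF p(1) _ _ p(2)] AB(1,2) by (simp add: Rc_def)
  thus False using ni nj by blast
qed

lemma quotR:
  fixes A :: "'k::field U poly"
  assumes "inR n p" "p \<noteq> 0" "Rc n A" "[:p:] dvd A"
  shows "\<exists>A'. Rc n A' \<and> A = smult p A'"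
proof -
  obtain A' where A': "A = [:p:] * A'" using assms(4) by (rule dvdE)
  hence A's: "A = smult p A'" by simp
  have "inR n (coeff A' k)" for k
  proof (cases "coeff A k = 0")
    case True
    hence "coeff A' k = 0" using A's assms(2) by simp
    thus ?thesis by (simp add: inR_zero)
  next
    case False
    have "p * coeff A' k = coeff A k" using A's by simp
    thus ?thesis using divR2 False assms(3) by (metis Rc_def)
  qed
  thus ?thesis using A's by (auto simp: Rc_def)
qed

lemma unit_invR: "(c::'k::field U) dvd 1 \<Longrightarrow> \<exists>c'. inR n c' \<and> c * c' = 1"
proof -
  assume "c dvd 1"
  then obtain c' where "1 = c * c'" by (rule dvdE)
  hence "inR n c'" using divR2[of c c' 1 n] by (simp add: inR_one)
  thus ?thesis using \<open>1 = c * c'\<close> by auto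
qed

lemma split_lemma:
  fixes a :: "'k::field U" and A B W :: "'k U poly"
  assumes IH: "\<And>f g h :: 'k U. inR n f \<Longrightarrow> inR n g \<Longrightarrow> inR n h \<Longrightarrow> irreducible f \<Longrightarrow> f dvd g * h \<Longrightarrow> f dvd g \<or> f dvd h"
  shows "inR n a \<Longrightarrow> a \<noteq> 0 \<Longrightarrow> Rc n A \<Longrightarrow> Rc n B \<Longrightarrow> smult a W = A * B \<Longrightarrow>
    \<exists>c1 c2 A' B'. inR n c1 \<and> inR n c2 \<and> Rc n A' \<and> Rc n B' \<and> A = smult c1 A' \<and> B = smult c2 B' \<and> W = A' * B' \<and> a = c1 * c2"
proof (induction "tdeg a" arbitrary: a A B W rule: less_induct)
  case less
  show ?case
  proof (cases "a dvd 1")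
    case True
    obtain c' where c': "inR n c'" "a * c' = 1" using unit_invR[OF True] by blast
    have "A = smult a (smult c' A)" using c'(2) by simp
    moreover have "W = smult c' A * B"
    proof -
      have "W = smult (c' * a) W" using c'(2) by (simp add: mult.commute)
      also have "\<dots> = smult c' (A * B)" using less.prems(5) by (simp flip: smult_smult)
      finally show ?thesis by simp
    qed
    moreover have "Rc n (smult c' A)" using c'(1) less.prems(3) by (rule Rc_smult)
    ultimately show ?thesis using less.prems(1,4) inR_one
      by (intro exI[of _ a] exI[of _ 1] exI[of _ "smult c' A"] exI[of _ B]) simp
  next
    case False
    obtain p where p: "irreducible p" "p dvd a" using irred_divisor less.prems(2) False by blast
    have pR: "inR n p" using dvdR p(2) less.prems(1,2) by blast
    obtain a' where a': "a = p * a'" using p(2) by (rule dvdE)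
    have a'R: "inR n a'" using divR2 a' less.prems(1,2) by metis
    have p0: "p \<noteq> 0" "a' \<noteq> 0" using a' less.prems(2) by auto
    have "tdeg p \<noteq> 0" using p(1) p0(1) unfolding irreducible_def by (auto simp: unit_iff)
    hence lt: "tdeg a' < tdeg a" using tdeg_mult[OF p0] a' by simp
    have AB: "A * B = smult p (smult a' W)" using less.prems(5) a' by simp
    hence "[:p:] dvd A * B" by (intro dvdI[of _ _ "smult a' W"]) (simp add: mult.commute)
    hence "[:p:] dvd A \<or> [:p:] dvd B" using gauss[OF IH pR p(1) less.prems(3,4)] by blast
    thus ?thesis
    proof
      assume "[:p:] dvd A"
      then obtain A1 where A1: "Rc n A1" "A = smult p A1" using quotR pR p0(1) less.prems(3) by blast
      have "smult p (smult a' W) = smult p (A1 * B)" using AB A1(2) by simp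
      hence "smult a' W = A1 * B" using p0(1) by (rule smult_cancel)
      then obtain c1 c2 A' B' where ih: "inR n c1" "inR n c2" "Rc n A'" "Rc n B'" "A1 = smult c1 A'"
        "B = smult c2 B'" "W = A' * B'" "a' = c1 * c2"
        using less.hyps[OF lt a'R p0(2) A1(1) less.prems(4)] by blast
      show ?thesis
        by (intro exI[of _ "p * c1"] exI[of _ c2] exI[of _ A'] exI[of _ B'])
           (simp add: ih inR_mult pR A1(2) a' mult.assoc)
    next
      assume "[:p:] dvd B"
      then obtain B1 where B1: "Rc n B1" "B = smult p B1" using quotR pR p0(1) less.prems(4) by blast
      have "smult p (smult a' W) = smult p (A * B1)" using AB B1(2) by simp
      hence "smult a' W = A * B1" using p0(1) by (rule smult_cancel)
      then obtain c1 c2 A' B' where ih: "inR n c1" "inR n c2" "Rc n A'" "Rc n B'" "A = smult c1 A'"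
        "B1 = smult c2 B'" "W = A' * B'" "a' = c1 * c2"
        using less.hyps[OF lt a'R p0(2) less.prems(3) B1(1)] by blast
      show ?thesis
        by (intro exI[of _ c1] exI[of _ "p * c2"] exI[of _ A'] exI[of _ B'])
           (simp add: ih inR_mult pR B1(2) a' mult.assoc mult.left_commute)
    qed
  qed
qed

definition prim :: "nat \<Rightarrow> 'k::field U poly \<Rightarrow> bool" where
  "prim n F \<longleftrightarrow> (\<forall>c. inR n c \<longrightarrow> (\<forall>k. c dvd coeff F k) \<longrightarrow> c dvd 1)"

lemma prim_div:
  fixes b :: "'k::field U" and F X Q :: "'k U poly"
  assumes IH: "\<And>f g h :: 'k U. inR n f \<Longrightarrow> inR n g \<Longrightarrow> inR n h \<Longrightarrow> irreducible f \<Longrightarrow> f dvd g * h \<Longrightarrow> f dvd g \<or> f dvd h"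
    and "Rc n F" "prim n F" "inR n b" "b \<noteq> 0" "Rc n Q" "smult b X = F * Q"
  shows "\<exists>Q'. Rc n Q' \<and> X = F * Q'"
proof -
  obtain c1 c2 F' Q' where s: "inR n c1" "inR n c2" "Rc n F'" "Rc n Q'" "F = smult c1 F'"
      "Q = smult c2 Q'" "X = F' * Q'" "b = c1 * c2"
    using split_lemma[OF IH assms(4,5,2,6,7)] by blast
  have "\<forall>k. c1 dvd coeff F k" using s(5) by simp
  hence "c1 dvd 1" using assms(3) s(1) unfolding prim_def by blast
  then obtain c' where c': "inR n c'" "c1 * c' = 1" using unit_invR by blast
  have "F' = smult c' F" using s(5) c'(2) by (simp add: mult.commute)
  hence "X = F * smult c' Q'" using s(7) by simp
  moreover have "Rc n (smult c' Q')" using c'(1) s(4) by (rule Rc_smult)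
  ultimately show ?thesis by blast
qed

lemma pdiv:
  fixes F P :: "'k::field U poly"
  assumes P: "Rc n P" "P \<noteq> 0"
  shows "Rc n F \<Longrightarrow> \<exists>k q r. Rc n q \<and> Rc n r \<and> smult (lead_coeff P ^ k) F = q * P + r \<and> (r = 0 \<or> degree r < degree P)"
proof (induction "degree F" arbitrary: F rule: less_induct)
  case less
  show ?case
  proof (cases "F = 0 \<or> degree F < degree P")
    case True
    thus ?thesis using less.prems Rc_zero
      by (intro exI[of _ 0] exI[of _ 0] exI[of _ F]) auto
  next
    case False
    hence F0: "F \<noteq> 0" and le: "degree P \<le> degree F" by auto
    define m where "m = degree F - degree P"
    define F1 where "F1 = smult (lead_coeff P) F - monom (lead_coeff F) m * P"
    have lcR: "inR n (lead_coeff P)" "inR n (lead_coeff F)" using P(1) less.prems by (auto simp: Rc_def)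
    have RF1: "Rc n F1" unfolding F1_def
      by (intro Rc_diff Rc_smult Rc_mult Rc_monom lcR less.prems P(1))
    have "degree (monom (lead_coeff F) m * P) \<le> degree F"
      using degree_mult_le[of "monom (lead_coeff F) m" P] degree_monom_le[of "lead_coeff F" m] le m_def
      by linarith
    hence dF1: "degree F1 \<le> degree F" unfolding F1_def
      by (intro degree_diff_le) (auto intro: order.trans[OF degree_smult_le])
    have cm: "coeff (monom (lead_coeff F) m * P) (degree F) = lead_coeff F * lead_coeff P"
      using le by (simp add: coeff_monom_mult m_def)
    have cF1: "coeff F1 (degree F) = 0"
      unfolding F1_def coeff_diff cm by simp
    have F1lt: "F1 = 0 \<or> degree F1 < degree F"
    proof (cases "F1 = 0")
      case False
      hence "coeff F1 (degree F1) \<noteq> 0" by simp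
      hence "degree F1 \<noteq> degree F" using cF1 by metis
      thus ?thesis using dF1 by simp
    qed simp
    have eq: "smult (lead_coeff P) F = F1 + monom (lead_coeff F) m * P" by (simp add: F1_def)
    show ?thesis
    proof (cases "F1 = 0")
      case True
      show ?thesis using eq True lcR Rc_zero
        by (intro exI[of _ 1] exI[of _ "monom (lead_coeff F) m"] exI[of _ 0]) (simp add: Rc_monom)
    next
      case False
      hence "degree F1 < degree F" using F1lt by simp
      then obtain k q r where ih: "Rc n q" "Rc n r" "smult (lead_coeff P ^ k) F1 = q * P + r" "r = 0 \<or> degree r < degree P"
        using less.hyps RF1 by blast
      have "smult (lead_coeff P ^ Suc k) F = smult (lead_coeff P ^ k) (smult (lead_coeff P) F)"
        by (simp only: smult_smult power_Suc2)
      also have "\<dots> = smult (lead_coeff P ^ k) (F1 + monom (lead_coeff F) m * P)"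
        by (simp only: eq)
      also have "\<dots> = (q + smult (lead_coeff P ^ k) (monom (lead_coeff F) m)) * P + r"
        using ih(3) by (simp add: smult_add_right distrib_right)
      finally show ?thesis using ih lcR
        by (intro exI[of _ "Suc k"] exI[of _ "q + smult (lead_coeff P ^ k) (monom (lead_coeff F) m)"] exI[of _ r])
           (simp add: Rc_add Rc_smult Rc_monom inR_power)
    qed
  qed
qed

lemma step_lemma:
  fixes f g h :: "'k::field U"
  assumes IH: "\<And>f g h :: 'k U. inR n f \<Longrightarrow> inR n g \<Longrightarrow> inR n h \<Longrightarrow> irreducible f \<Longrightarrow> f dvd g * h \<Longrightarrow> f dvd g \<or> f dvd h"
    and fR: "inR (Suc n) f" and gR: "inR (Suc n) g" and hR: "inR (Suc n) h"
    and irr: "irreducible f" and fgh: "f dvd g * h"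
  shows "f dvd g \<or> f dvd h"
proof (cases "g * h = 0")
  case True thus ?thesis by auto
next
  case ghnz: False
  have f0: "f \<noteq> 0" using irr by auto
  obtain w where w: "g * h = f * w" using fgh by (rule dvdE)
  have wR: "inR (Suc n) w" using divR2[of f w "g*h"] w ghnz inR_mult[OF gR hR] by simp
  define F where "F = rep n f"
  define G where "G = rep n g"
  define H where "H = rep n h"
  define W where "W = rep n w"
  have RF: "Rc n F" "psi n F = f" using rep[OF fR] F_def by auto
  have RG: "Rc n G" "psi n G = g" using rep[OF gR] G_def by auto
  have RH: "Rc n H" "psi n H = h" using rep[OF hR] H_def by auto
  have RW: "Rc n W" "psi n W = w" using rep[OF wR] W_def by auto
  have GHFW: "G * H = F * W"
    by (rule psi_inj[of n]) (simp_all add: Rc_mult RF RG RH RW psi_mult w)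
  show ?thesis
  proof (cases "degree F = 0")
    case True
    define c where "c = coeff F 0"
    have Fc: "F = [:c:]" using degree_0_id[OF True] c_def by simp
    have fc: "f = c" using RF(2) Fc psi_const by metis
    have cR: "inR n c" using RF(1) c_def by (simp add: Rc_def)
    have "[:c:] dvd G * H" unfolding GHFW Fc by (rule dvd_triv_left)
    hence "[:c:] dvd G \<or> [:c:] dvd H" using gauss[OF IH cR _ RG(1) RH(1)] irr fc by blast
    thus ?thesis
    proof
      assume "[:c:] dvd G"
      then obtain G' where "G = [:c:] * G'" by (rule dvdE)
      hence "g = c * psi n G'" using RG(2) by (simp add: psi_mult psi_const psi_smult)
      thus ?thesis using fc by simp
    next
      assume "[:c:] dvd H"
      then obtain H' where "H = [:c:] * H'" by (rule dvdE)
      hence "h = c * psi n H'" using RH(2) by (simp add: psi_mult psi_const psi_smult)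
      thus ?thesis using fc by simp
    qed
  next
    case degF: False
    have F0: "F \<noteq> 0" using RF(2) f0 psi_zero by metis
    have prim: "prim n F" unfolding prim_def
    proof (intro allI impI)
      fix c assume cR: "inR n c" and cd: "\<forall>k. c dvd coeff F k"
      have c0: "c \<noteq> 0"
      proof
        assume "c = 0"
        hence "\<forall>k. coeff F k = 0" using cd by simp
        hence "F = 0" by (simp add: poly_eq_iff)
        thus False using F0 by simp
      qed
      have "[:c:] dvd F" using cd by (simp add: const_poly_dvd_iff)
      then obtain F' where F': "Rc n F'" "F = smult c F'" using quotR[OF cR c0 RF(1)] by blast
      have "f = c * psi n F'" using RF(2) F'(2) by (simp add: psi_smult)
      hence "c dvd 1 \<or> psi n F' dvd 1" using irr by (simp add: irreducibleD)
      thus "c dvd 1"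
      proof
        assume "psi n F' dvd 1"
        hence "degree F' = 0" using psi_unit_deg F'(1) by blast
        hence "degree F = 0" using F'(2) by simp
        thus "c dvd 1" using degF by simp
      qed
    qed
    show ?thesis
    proof (cases "f dvd g")
      case True thus ?thesis by simp
    next
      case nfg: False
      have G0: "G \<noteq> 0"
      proof
        assume "G = 0"
        hence "g = 0" using RG(2) by (simp add: psi_zero)
        thus False using nfg by simp
      qed
      define S where "S = {P. P \<noteq> 0 \<and> (\<exists>u v. Rc n u \<and> Rc n v \<and> P = u * F + v * G)}"
      have GS: "G \<in> S" unfolding S_def using G0 Rc_zero Rc_one
        by (intro CollectI conjI exI[of _ 0] exI[of _ 1]) auto
      define m where "m = (LEAST m. \<exists>P\<in>S. degree P = m)"
      have "\<exists>P\<in>S. degree P = m" unfolding m_def by (rule LeastI_ex[of "\<lambda>m. \<exists>P\<in>S. degree P = m"]) (use GS in auto)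
      then obtain P where PS: "P \<in> S" and Pm: "degree P = m" by blast
      have minP: "Q \<in> S \<Longrightarrow> degree P \<le> degree Q" for Q
        unfolding Pm m_def by (rule Least_le) blast
      obtain u v where uv: "Rc n u" "Rc n v" "P = u * F + v * G" and P0: "P \<noteq> 0"
        using PS unfolding S_def by blast
      have RP: "Rc n P" using uv by (simp add: Rc_add Rc_mult RF(1) RG(1))
      have ideal0: "r = 0" if "Rc n x" "Rc n y" "r = x * F + y * G" "r = 0 \<or> degree r < degree P" for x y r
      proof (rule ccontr)
        assume "r \<noteq> 0"
        hence "r \<in> S" unfolding S_def using that by blast
        hence "degree P \<le> degree r" by (rule minP)
        thus False using that(4) \<open>r \<noteq> 0\<close> by simp
      qed
      have lcR: "inR n (lead_coeff P)" using RP by (simp add: Rc_def)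
      have lc0: "lead_coeff P \<noteq> 0" using P0 by simp
      have deg0: "degree P = 0"
      proof (rule ccontr)
        assume dP: "degree P \<noteq> 0"
        obtain k q r where pd: "Rc n q" "Rc n r" "smult (lead_coeff P ^ k) F = q * P + r" "r = 0 \<or> degree r < degree P"
          using pdiv[OF RP P0 RF(1)] by blast
        have req: "r = ([:lead_coeff P ^ k:] - q * u) * F + (0 - q * v) * G"
          using pd(3) uv(3) by (simp add: algebra_simps)
        have Rx: "Rc n ([:lead_coeff P ^ k:] - q * u)" by (intro Rc_diff Rc_const inR_power lcR Rc_mult pd(1) uv(1))
        have Ry: "Rc n (0 - q * v)" by (intro Rc_diff Rc_zero Rc_mult pd(1) uv(2))
        have r0: "r = 0" by (rule ideal0[OF Rx Ry req pd(4)])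
        have aR: "inR n (lead_coeff P ^ k)" by (rule inR_power[OF lcR])
        have a0: "lead_coeff P ^ k \<noteq> 0" using lc0 by simp
        have "smult (lead_coeff P ^ k) F = q * P" using pd(3) r0 by simp
        then obtain c1 c2 q' P' where sp: "inR n c1" "inR n c2" "Rc n q'" "Rc n P'" "q = smult c1 q'"
            "P = smult c2 P'" "F = q' * P'" "lead_coeff P ^ k = c1 * c2"
          using split_lemma[OF IH aR a0 pd(1) RP] by blast
        have "f = psi n q' * psi n P'" using RF(2) sp(7) by (simp add: psi_mult)
        hence "psi n q' dvd 1 \<or> psi n P' dvd 1" using irr by (simp add: irreducibleD)
        thus False
        proof
          assume "psi n P' dvd 1"
          hence "degree P' = 0" using psi_unit_deg sp(4) by blast
          hence "degree P = 0" using sp(6) by simp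
          thus False using dP by simp
        next
          assume qu: "psi n q' dvd 1"
          hence "degree q' = 0" using psi_unit_deg sp(3) by blast
          define e where "e = coeff q' 0"
          have qe: "q' = [:e:]" using degree_0_id[OF \<open>degree q' = 0\<close>] e_def by simp
          hence "e dvd 1" using qu psi_const by metis
          then obtain e' where e': "inR n e'" "e * e' = 1" using unit_invR by blast
          have "P' = smult e' F" using sp(7) qe e'(2) by (simp add: mult.commute)
          hence PF: "P = smult (c2 * e') F" using sp(6) by simp
          obtain k2 q2 r2 where pd2: "Rc n q2" "Rc n r2" "smult (lead_coeff P ^ k2) G = q2 * P + r2" "r2 = 0 \<or> degree r2 < degree P"
            using pdiv[OF RP P0 RG(1)] by blast
          have req2: "r2 = (0 - q2 * u) * F + ([:lead_coeff P ^ k2:] - q2 * v) * G"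
            using pd2(3) uv(3) by (simp add: algebra_simps)
          have Ry2: "Rc n ([:lead_coeff P ^ k2:] - q2 * v)" by (intro Rc_diff Rc_const inR_power lcR Rc_mult pd2(1) uv(2))
          have Rx2: "Rc n (0 - q2 * u)" by (intro Rc_diff Rc_zero Rc_mult pd2(1) uv(1))
          have r20: "r2 = 0" by (rule ideal0[OF Rx2 Ry2 req2 pd2(4)])
          have "smult (lead_coeff P ^ k2) G = F * smult (c2 * e') q2"
            using pd2(3) r20 PF by (simp add: mult.commute)
          then obtain Q' where Q': "Rc n Q'" "G = F * Q'"
            using prim_div[OF IH RF(1) prim inR_power[OF lcR] _ Rc_smult[OF inR_mult[OF sp(2) e'(1)] pd2(1)]] lc0
            by auto
          hence "g = f * psi n Q'" using RG(2) RF(2) by (simp add: psi_mult)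
          thus False using nfg by simp
        qed
      qed
      define c where "c = coeff P 0"
      have Pc: "P = [:c:]" using degree_0_id[OF deg0] c_def by simp
      have c0: "c \<noteq> 0" using P0 Pc by simp
      have cR: "inR n c" using RP c_def by (simp add: Rc_def)
      have "smult c H = F * (u * H + v * W)"
      proof -
        have "smult c H = P * H" using Pc by simp
        also have "\<dots> = u * F * H + v * (G * H)" using uv(3) by (simp add: algebra_simps)
        also have "\<dots> = F * (u * H + v * W)" using GHFW by (simp add: algebra_simps)
        finally show ?thesis .
      qed
      then obtain Q' where Q': "Rc n Q'" "H = F * Q'"
        using prim_div[OF IH RF(1) prim cR c0 Rc_add[OF Rc_mult[OF uv(1) RH(1)] Rc_mult[OF uv(2) RW(1)]]] by blast
      hence "h = f * psi n Q'" using RH(2) RF(2) by (simp add: psi_mult)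
      thus ?thesis by simp
    qed
  qed
qed

theorem poly_prime:
  fixes f g h :: "'k::field U"
  shows "inR n f \<Longrightarrow> inR n g \<Longrightarrow> inR n h \<Longrightarrow> irreducible f \<Longrightarrow> f dvd g * h \<Longrightarrow> f dvd g \<or> f dvd h"
proof (induction n arbitrary: f g h)
  case 0
  have "f \<noteq> 0" using 0 by auto
  moreover have "tdeg f = 0"
  proof -
    have "\<forall>M\<in>ks f. ks M = {}" using 0(1) unfolding inR_def by auto
    hence "\<forall>M\<in>ks f. M = 0" by simp
    hence "\<forall>M\<in>ks f. wtot M = 0" by (simp add: wtot_zero)
    thus ?thesis using \<open>f \<noteq> 0\<close> by (simp add: tdeg_def wdeg_zero_iff)
  qed
  ultimately have "f dvd 1" by (simp add: unit_iff)
  thus ?case using 0(4) by (simp add: irreducible_def)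
next
  case (Suc n)
  show ?case by (rule step_lemma[OF Suc.IH Suc.prems])
qed

lemma dvd_cancel_l: "(s::'a::idom) \<noteq> 0 \<Longrightarrow> s * a dvd s * b \<Longrightarrow> a dvd b"
proof -
  assume s: "s \<noteq> 0" "s * a dvd s * b"
  from s(2) obtain k where "s * b = s * a * k" by (rule dvdE)
  hence "s * b = s * (a * k)" by (simp add: mult.assoc)
  hence "b = a * k" using s(1) by simp
  thus "a dvd b" by (rule dvdI)
qed

lemma coprime_div:
  fixes p1 p2 b1 :: "'k::field U"
  assumes cop: "\<And>h. inR n h \<Longrightarrow> h dvd p1 \<Longrightarrow> h dvd p2 \<Longrightarrow> h dvd 1"
  shows "inR n p1 \<Longrightarrow> inR n p2 \<Longrightarrow> inR n b1 \<Longrightarrow> p1 \<noteq> 0 \<Longrightarrow> p1 dvd b1 * p2 \<Longrightarrow> p1 dvd b1"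
  using cop
proof (induction "tdeg p1" arbitrary: p1 b1 rule: less_induct)
  case less
  show ?case
  proof (cases "p1 dvd 1 \<or> b1 = 0")
    case True thus ?thesis by (elim disjE) (auto intro: dvd_trans[OF _ one_dvd])
  next
    case False
    hence nu: "\<not> p1 dvd 1" and b10: "b1 \<noteq> 0" by auto
    obtain q where q: "irreducible q" "q dvd p1" using irred_divisor less.prems(4) nu by blast
    have qR: "inR n q" using dvdR[OF q(2) less.prems(4,1)] .
    obtain p1' where p1': "p1 = q * p1'" using q(2) by (rule dvdE)
    have q0: "q \<noteq> 0" "p1' \<noteq> 0" using p1' less.prems(4) by auto
    have p1'R: "inR n p1'" using divR2[OF p1'[symmetric] less.prems(4,1)] .
    have "q dvd b1 * p2" using q(2) less.prems(5) by (rule dvd_trans)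
    hence "q dvd b1 \<or> q dvd p2" using poly_prime[OF qR less.prems(3,2) q(1)] by blast
    thus ?thesis
    proof
      assume "q dvd p2"
      hence "q dvd 1" using less.prems(6)[OF qR q(2)] by blast
      thus ?thesis using q(1) by (simp add: irreducible_def)
    next
      assume "q dvd b1"
      then obtain b1' where b1': "b1 = q * b1'" by (rule dvdE)
      have b1'R: "inR n b1'" using divR2[OF b1'[symmetric] b10 less.prems(3)] .
      have "q * p1' dvd q * (b1' * p2)" using less.prems(5) p1' b1' by (simp add: mult.assoc)
      hence d: "p1' dvd b1' * p2" by (rule dvd_cancel_l[OF q0(1)])
      have "tdeg q \<noteq> 0" using q(1) q0(1) unfolding irreducible_def by (auto simp: unit_iff)
      hence lt: "tdeg p1' < tdeg p1" using tdeg_mult[OF q0] p1' by simp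
      have cop': "h dvd 1" if "inR n h" "h dvd p1'" "h dvd p2" for h
        using less.prems(6)[OF that(1) _ that(3)] that(2) p1' by (metis dvd_mult2 mult.commute)
      have "p1' dvd b1'" using less.hyps[OF lt p1'R less.prems(2) b1'R q0(2) d] cop' by blast
      thus ?thesis using p1' b1' by (simp add: mult_dvd_mono)
    qed
  qed
qed

lemma gcd_deg:
  fixes s0 s1 s2 b1 b2 :: "'k::field U"
  assumes R: "inR n s0" "inR n s1" "inR n s2" "inR n b1"
    and nz: "s1 \<noteq> 0" "s2 \<noteq> 0" "b1 \<noteq> 0"
    and d: "s0 dvd s1" "s0 dvd s2"
    and g: "\<And>h. inR n h \<Longrightarrow> h dvd s1 \<Longrightarrow> h dvd s2 \<Longrightarrow> h dvd s0"
    and eq: "b1 * s2 + s1 * b2 = 0"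
  shows "tdeg s1 \<le> tdeg s0 + tdeg b1"
proof -
  obtain p1 where p1: "s1 = s0 * p1" using d(1) by (rule dvdE)
  obtain p2 where p2: "s2 = s0 * p2" using d(2) by (rule dvdE)
  have s00: "s0 \<noteq> 0" "p1 \<noteq> 0" using nz p1 by auto
  have p1R: "inR n p1" using divR2[OF p1[symmetric] nz(1) R(2)] .
  have p2R: "inR n p2" using divR2[OF p2[symmetric] nz(2) R(3)] .
  have "s0 * (b1 * p2) = s0 * (p1 * (- b2))"
    using eq p1 p2 by (simp add: algebra_simps add_eq_0_iff)
  hence "b1 * p2 = p1 * (- b2)" by (simp only: mult_left_cancel[OF s00(1)])
  hence dv: "p1 dvd b1 * p2" by (simp add: dvdI)
  have cop: "h dvd 1" if "inR n h" "h dvd p1" "h dvd p2" for h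
  proof -
    have "s0 * h dvd s1" "s0 * h dvd s2" using that p1 p2 by (simp_all add: mult_dvd_mono)
    hence "s0 * h dvd s0" using g[OF inR_mult[OF R(1) that(1)]] by blast
    hence "s0 * h dvd s0 * 1" by simp
    thus ?thesis by (rule dvd_cancel_l[OF s00(1)])
  qed
  have "p1 dvd b1" using coprime_div[OF cop p1R p2R R(4) s00(2) dv] by blast
  then obtain c where c: "b1 = p1 * c" by (rule dvdE)
  have "c \<noteq> 0" using c nz(3) by auto
  hence "tdeg b1 = tdeg p1 + tdeg c" using tdeg_mult[OF s00(2)] c by simp
  moreover have "tdeg s1 = tdeg s0 + tdeg p1" using tdeg_mult[OF s00] p1 by simp
  ultimately show ?thesis by simp
qed

section \<open>Transfer from the raw representation\<close>

abbreviation AbsM :: "(nat \<Rightarrow> nat) \<Rightarrow> mono" where "AbsM \<equiv> Abs_poly_mapping"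

definition toU :: "((nat \<Rightarrow> nat) \<Rightarrow> 'k::comm_ring_1) \<Rightarrow> 'k U" where
  "toU f = (\<Sum>I\<in>supp f. sg (AbsM I) (f I))"

definition fromU :: "'k::comm_ring_1 U \<Rightarrow> ((nat \<Rightarrow> nat) \<Rightarrow> 'k)" where
  "fromU q = (\<lambda>J. if finite {i. J i \<noteq> 0} then lk q (AbsM J) else 0)"

lemma mindex_finite: "is_mindex n J \<Longrightarrow> finite {i. J i \<noteq> 0}"
  unfolding is_mindex_def by (rule finite_subset[of _ "{..<n}"]) (auto simp: not_less[symmetric])

lemma AbsM_eq_iff: "finite {i. J i \<noteq> 0} \<Longrightarrow> AbsM J = M \<longleftrightarrow> J = lk M"
  by auto

lemma lookup_toU:
  assumes "is_mpoly n f" shows "lk (toU f) M = f (lk M)"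
proof -
  have fin: "finite (supp f)" and mi: "\<And>I. I \<in> supp f \<Longrightarrow> finite {i. I i \<noteq> 0}"
    using assms mindex_finite unfolding is_mpoly_def by blast+
  have "lk (toU f) M = (\<Sum>I\<in>supp f. if I = lk M then f I else 0)"
    unfolding toU_def lookup_sum Poly_Mapping.lookup_single
  proof (rule sum.cong)
    fix I assume "I \<in> supp f"
    show "(f I when AbsM I = M) = (if I = lk M then f I else 0)"
      using AbsM_eq_iff[OF mi[OF \<open>I \<in> supp f\<close>], of M] by (simp add: when_def)
  qed simp
  also have "\<dots> = f (lk M)" using fin by (simp add: sum.delta' supp_def)
  finally show ?thesis .
qed

lemma toU_inj:
  assumes "is_mpoly n A" "is_mpoly n B" "toU A = toU B" shows "A = B"
proof
  fix J
  show "A J = B J"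
  proof (cases "J \<in> supp A \<union> supp B")
    case True
    hence "finite {i. J i \<noteq> 0}" using assms(1,2) mindex_finite unfolding is_mpoly_def by blast
    hence "lk (AbsM J) = J" by simp
    thus ?thesis using lookup_toU[OF assms(1), of "AbsM J"] lookup_toU[OF assms(2), of "AbsM J"] assms(3) by simp
  next
    case False thus ?thesis by (simp add: supp_def)
  qed
qed

lemma toU_zero_iff: "is_mpoly n A \<Longrightarrow> toU A = 0 \<longleftrightarrow> A = (\<lambda>_. 0)"
proof
  assume a: "is_mpoly n A" "toU A = 0"
  have "is_mpoly n (\<lambda>_. 0::'a)" by (simp add: is_mpoly_def supp_def)
  moreover have "toU (\<lambda>_. 0::'a) = 0" by (simp add: toU_def supp_def)
  ultimately show "A = (\<lambda>_. 0)" using toU_inj[OF a(1)] a(2) by metis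
qed (simp add: toU_def supp_def)

lemma inR_toU: "is_mpoly n f \<Longrightarrow> inR n (toU f)"
  unfolding inR_def
proof (intro ballI)
  fix M i assume f: "is_mpoly n f" and M: "M \<in> ks (toU f)" and i: "i \<in> ks M"
  have "f (lk M) \<noteq> 0" using M lookup_toU[OF f] by (simp add: in_keys_iff)
  hence "is_mindex n (lk M)" using f unfolding is_mpoly_def supp_def by blast
  thus "i < n" using i unfolding is_mindex_def by (auto simp: in_keys_iff not_less[symmetric])
qed

lemma fromU_mpoly: assumes "inR n q" shows "is_mpoly n (fromU q)"
proof -
  have sub: "supp (fromU q) \<subseteq> lk ` ks q"
  proof
    fix J assume "J \<in> supp (fromU q)"
    hence fin: "finite {i. J i \<noteq> 0}" and nz: "lk q (AbsM J) \<noteq> 0"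
      by (auto simp: supp_def fromU_def split: if_splits)
    hence "AbsM J \<in> ks q" by (simp add: in_keys_iff)
    moreover have "J = lk (AbsM J)" using fin by simp
    ultimately show "J \<in> lk ` ks q" by blast
  qed
  have "is_mindex n J" if "J \<in> supp (fromU q)" for J
  proof -
    have "J \<in> lk ` ks q" using sub that by blast
    then obtain M where M: "M \<in> ks q" "J = lk M" by blast
    have "\<forall>i\<in>ks M. i < n" using assms M(1) unfolding inR_def by blast
    thus ?thesis unfolding is_mindex_def M(2) by (metis in_keys_iff not_le)
  qed
  thus ?thesis unfolding is_mpoly_def using finite_subset[OF sub] by auto
qed

lemma toU_fromU: assumes "inR n q" shows "toU (fromU q) = q"
  by (rule poly_mapping_eqI) (simp only: lookup_toU[OF fromU_mpoly[OF assms]], simp add: fromU_def)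

lemma pmult_mpoly: assumes "is_mpoly n P" "is_mpoly n Q" shows "is_mpoly n (pmult P Q)"
proof -
  have sub: "supp (pmult P Q) \<subseteq> (\<lambda>(I,J). (\<lambda>i. I i + J i)) ` (supp P \<times> supp Q)"
  proof
    fix M assume "M \<in> supp (pmult P Q)"
    hence "(\<Sum>I\<in>supp P. \<Sum>J\<in>supp Q. if (\<lambda>i. I i + J i) = M then P I * Q J else 0) \<noteq> 0"
      by (simp add: supp_def pmult_def)
    then obtain I where I: "I \<in> supp P" "(\<Sum>J\<in>supp Q. if (\<lambda>i. I i + J i) = M then P I * Q J else 0) \<noteq> 0"
      using sum.not_neutral_contains_not_neutral by blast
    then obtain J where J: "J \<in> supp Q" "(if (\<lambda>i. I i + J i) = M then P I * Q J else 0) \<noteq> 0"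
      using sum.not_neutral_contains_not_neutral by blast
    hence "M = (\<lambda>i. I i + J i)" by (simp split: if_splits)
    thus "M \<in> (\<lambda>(I,J). (\<lambda>i. I i + J i)) ` (supp P \<times> supp Q)" using I(1) J(1) by force
  qed
  have "is_mindex n M" if "M \<in> supp (pmult P Q)" for M
  proof -
    have "M \<in> (\<lambda>(I,J). (\<lambda>i. I i + J i)) ` (supp P \<times> supp Q)" using sub that by blast
    then obtain I J where "I \<in> supp P" "J \<in> supp Q" "M = (\<lambda>i. I i + J i)" by auto
    thus ?thesis using assms unfolding is_mpoly_def is_mindex_def by auto
  qed
  moreover have "finite (supp (pmult P Q))"
    by (rule finite_subset[OF sub]) (use assms in \<open>simp add: is_mpoly_def\<close>)
  ultimately show ?thesis by (simp add: is_mpoly_def)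
qed

lemma toU_pmult:
  assumes P: "is_mpoly n P" and Q: "is_mpoly n Q" shows "toU (pmult P Q) = toU P * toU Q"
proof (rule poly_mapping_eqI)
  fix M
  have finP: "finite (supp P)" "\<And>I. I \<in> supp P \<Longrightarrow> finite {i. I i \<noteq> 0}"
    using P mindex_finite unfolding is_mpoly_def by blast+
  have finQ: "finite (supp Q)" "\<And>I. I \<in> supp Q \<Longrightarrow> finite {i. I i \<noteq> 0}"
    using Q mindex_finite unfolding is_mpoly_def by blast+
  have key: "AbsM I + AbsM J = M \<longleftrightarrow> (\<lambda>i. I i + J i) = lk M" if "I \<in> supp P" "J \<in> supp Q" for I J
  proof -
    have "lk (AbsM I + AbsM J) = (\<lambda>i. I i + J i)"
      using finP(2)[OF that(1)] finQ(2)[OF that(2)] by (simp add: Poly_Mapping.lookup_add fun_eq_iff)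
    thus ?thesis by (metis lookup_inverse)
  qed
  have "toU P * toU Q = (\<Sum>I\<in>supp P. \<Sum>J\<in>supp Q. sg (AbsM I + AbsM J) (P I * Q J))"
    unfolding toU_def sum_product by (simp add: mult_single)
  hence "lk (toU P * toU Q) M = (\<Sum>I\<in>supp P. \<Sum>J\<in>supp Q. if (\<lambda>i. I i + J i) = lk M then P I * Q J else 0)"
    by (simp add: lookup_sum Poly_Mapping.lookup_single when_def key cong: sum.cong)
  also have "\<dots> = pmult P Q (lk M)" by (simp add: pmult_def)
  also have "\<dots> = lk (toU (pmult P Q)) M" using lookup_toU[OF pmult_mpoly[OF P Q]] by simp
  finally show "lk (toU (pmult P Q)) M = lk (toU P * toU Q) M" by simp
qed

lemma wtot_AbsM: assumes "is_mindex n I" shows "wtot (AbsM I) = mdeg n I"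
proof -
  have fin: "finite {i. I i \<noteq> 0}" using mindex_finite[OF assms] .
  have ks: "ks (AbsM I) = {i. I i \<noteq> 0}" using fin by (simp add: Poly_Mapping.keys.rep_eq)
  have "wtot (AbsM I) = (\<Sum>i\<in>{i. I i \<noteq> 0}. I i)" unfolding wtot_def wsum_def ks using fin by simp
  also have "\<dots> = (\<Sum>i<n. I i)"
    by (rule sum.mono_neutral_left) (use assms in \<open>auto simp: is_mindex_def not_less[symmetric]\<close>)
  finally show ?thesis by (simp add: mdeg_def)
qed

lemma keys_toU: assumes "is_mpoly n f" shows "ks (toU f) = AbsM ` supp f"
proof
  show "ks (toU f) \<subseteq> AbsM ` supp f"
  proof
    fix M assume "M \<in> ks (toU f)"
    hence "f (lk M) \<noteq> 0" using lookup_toU[OF assms] by (simp add: in_keys_iff)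
    thus "M \<in> AbsM ` supp f" by (intro image_eqI[of _ _ "lk M"]) (auto simp: supp_def)
  qed
next
  show "AbsM ` supp f \<subseteq> ks (toU f)"
  proof
    fix M assume "M \<in> AbsM ` supp f"
    then obtain I where I: "I \<in> supp f" "M = AbsM I" by blast
    hence "finite {i. I i \<noteq> 0}" using assms mindex_finite unfolding is_mpoly_def by blast
    hence "lk M = I" using I(2) by simp
    thus "M \<in> ks (toU f)" using I(1) lookup_toU[OF assms] by (simp add: in_keys_iff supp_def)
  qed
qed

lemma tdeg_toU: assumes "is_mpoly n f" shows "tdeg (toU f) = pdeg n f"
proof -
  have "wtot ` ks (toU f) = mdeg n ` supp f"
    unfolding keys_toU[OF assms] image_image
    by (rule image_cong) (use assms wtot_AbsM in \<open>auto simp: is_mpoly_def\<close>)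
  thus ?thesis by (simp add: tdeg_def wdeg_def pdeg_def)
qed

lemma pdvd_toU: "is_mpoly n (H::(nat \<Rightarrow> nat) \<Rightarrow> 'k::field) \<Longrightarrow> pdvd n H G \<Longrightarrow> toU H dvd toU G"
  unfolding pdvd_def using toU_pmult by (metis dvd_triv_left)

lemma toU_pdvd:
  fixes H G :: "(nat \<Rightarrow> nat) \<Rightarrow> 'k::field"
  assumes H: "is_mpoly n H" and G: "is_mpoly n G" and G0: "toU G \<noteq> 0" and d: "toU H dvd toU G"
  shows "pdvd n H G"
proof -
  obtain q where q: "toU G = toU H * q" using d by (rule dvdE)
  have qR: "inR n q" using divR2[OF q[symmetric] G0 inR_toU[OF G]] .
  define R where "R = fromU q"
  have R: "is_mpoly n R" "toU R = q" using fromU_mpoly[OF qR] toU_fromU[OF qR] R_def by auto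
  have "toU (pmult H R) = toU G" using toU_pmult[OF H R(1)] R(2) q by simp
  hence "G = pmult H R" using toU_inj[OF G pmult_mpoly[OF H R(1)]] by simp
  thus ?thesis unfolding pdvd_def using R(1) by blast
qed

section \<open>Operators\<close>

lemma mdeg_add: "mdeg n (\<lambda>i. I i + J i) = mdeg n I + mdeg n J"
  by (simp add: mdeg_def sum.distrib)

definition hcomp :: "nat \<Rightarrow> nat \<Rightarrow> ((nat \<Rightarrow> nat) \<Rightarrow> 'k::zero) \<Rightarrow> ((nat \<Rightarrow> nat) \<Rightarrow> 'k)" where
  "hcomp n a A = (\<lambda>J. if mdeg n J = a then A J else 0)"

lemma supp_hcomp: "supp (hcomp n a A) = {J\<in>supp A. mdeg n J = a}"
  by (auto simp: supp_def hcomp_def)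

lemma dpow_zeroK: "dpow \<delta> m (\<lambda>_. 0) x = x"
  by (induction m) auto

lemma mbinom_zero: "mbinom n I (\<lambda>_. 0) = 1"
  by (simp add: mbinom_def)

lemma op_comp_top:
  fixes A B :: "(nat \<Rightarrow> nat) \<Rightarrow> 'k::field"
  assumes fA: "finite (supp A)" and fB: "finite (supp B)"
    and dA: "\<forall>I\<in>supp A. mdeg n I \<le> a" and dB: "\<forall>J\<in>supp B. mdeg n J \<le> b"
    and dP: "a + b \<le> mdeg n P"
  shows "op_comp \<delta> n A B P = pmult (hcomp n a A) (hcomp n b B) P"
proof -
  define T where "T I J = (if (\<lambda>i. I i + J i) = P then A I * B J else 0)" for I J
  define T' where "T' I J = (if (\<lambda>i. I i + J i) = P then hcomp n a A I * hcomp n b B J else 0)" for I J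
  define Kset where "Kset I J = {K. is_mindex n K \<and> (\<forall>i<n. K i \<le> I i) \<and> (\<lambda>i. I i - K i + J i) = P}" for I J
  have Kzero: "K = (\<lambda>_. 0)" if I: "I \<in> supp A" and J: "J \<in> supp B" and K: "K \<in> Kset I J" for I J K
  proof -
    have Km: "is_mindex n K" "\<forall>i<n. K i \<le> I i" "(\<lambda>i. I i - K i + J i) = P" using K by (auto simp: Kset_def)
    have "mdeg n P = (\<Sum>i<n. I i - K i + J i)" using Km(3) by (auto simp: mdeg_def)
    also have "\<dots> = (\<Sum>i<n. I i - K i) + mdeg n J" by (simp add: sum.distrib mdeg_def)
    finally have e1: "mdeg n P = (\<Sum>i<n. I i - K i) + mdeg n J" .
    have "mdeg n I = (\<Sum>i<n. I i - K i) + mdeg n K"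
      unfolding mdeg_def sum.distrib[symmetric] by (rule sum.cong) (use Km(2) in auto)
    hence "mdeg n P + mdeg n K = mdeg n I + mdeg n J" using e1 by simp
    moreover have "mdeg n I \<le> a" "mdeg n J \<le> b" using dA dB I J by auto
    ultimately have "mdeg n K = 0" using dP by simp
    hence "\<forall>i<n. K i = 0" by (simp add: mdeg_def)
    thus ?thesis using Km(1) unfolding is_mindex_def by (metis not_less)
  qed
  have inner: "(\<Sum>K\<in>Kset I J. of_nat (mbinom n I K) * A I * dpow \<delta> n K (B J)) = T I J"
    if I: "I \<in> supp A" and J: "J \<in> supp B" for I J
  proof (cases "(\<lambda>i. I i + J i) = P")
    case True
    have "Kset I J = {\<lambda>_. 0}"
    proof
      show "Kset I J \<subseteq> {\<lambda>_. 0}" using Kzero[OF I J] by blast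
      show "{\<lambda>_. 0} \<subseteq> Kset I J" using True by (auto simp: Kset_def is_mindex_def)
    qed
    thus ?thesis using True by (simp add: T_def dpow_zeroK mbinom_zero)
  next
    case False
    have "Kset I J = {}"
    proof (rule ccontr)
      assume "Kset I J \<noteq> {}"
      then obtain K where K: "K \<in> Kset I J" by blast
      hence "K = (\<lambda>_. 0)" using Kzero[OF I J] by blast
      hence "(\<lambda>i. I i + J i) = P" using K by (simp add: Kset_def)
      thus False using False by simp
    qed
    thus ?thesis using False by (simp add: T_def)
  qed
  have "op_comp \<delta> n A B P = (\<Sum>I\<in>supp A. \<Sum>J\<in>supp B. T I J)"
    unfolding op_comp_def Kset_def[symmetric] using inner by simp
  also have "\<dots> = (\<Sum>I\<in>supp A. \<Sum>J\<in>supp B. T' I J)"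
  proof (intro sum.cong refl)
    fix I J assume I: "I \<in> supp A" and J: "J \<in> supp B"
    show "T I J = T' I J"
    proof (cases "(\<lambda>i. I i + J i) = P")
      case True
      hence "mdeg n I + mdeg n J = mdeg n P" using mdeg_add by metis
      moreover have "mdeg n I \<le> a" "mdeg n J \<le> b" using dA dB I J by auto
      ultimately have "mdeg n I = a" "mdeg n J = b" using dP by auto
      thus ?thesis using True by (simp add: T_def T'_def hcomp_def)
    qed (simp add: T_def T'_def)
  qed
  also have "\<dots> = (\<Sum>I\<in>supp (hcomp n a A). \<Sum>J\<in>supp B. T' I J)"
  proof (rule sum.mono_neutral_right[OF fA])
    show "supp (hcomp n a A) \<subseteq> supp A" by (auto simp: supp_hcomp)
    show "\<forall>I\<in>supp A - supp (hcomp n a A). (\<Sum>J\<in>supp B. T' I J) = 0"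
    proof
      fix I assume "I \<in> supp A - supp (hcomp n a A)"
      hence "hcomp n a A I = 0" by (simp add: supp_def)
      thus "(\<Sum>J\<in>supp B. T' I J) = 0" by (simp add: T'_def cong: if_cong)
    qed
  qed
  also have "\<dots> = (\<Sum>I\<in>supp (hcomp n a A). \<Sum>J\<in>supp (hcomp n b B). T' I J)"
  proof (rule sum.cong[OF refl])
    fix I
    show "(\<Sum>J\<in>supp B. T' I J) = (\<Sum>J\<in>supp (hcomp n b B). T' I J)"
    proof (rule sum.mono_neutral_right[OF fB])
      show "supp (hcomp n b B) \<subseteq> supp B" by (auto simp: supp_hcomp)
      show "\<forall>J\<in>supp B - supp (hcomp n b B). T' I J = 0"
        by (auto simp: T'_def supp_def hcomp_def)
    qed
  qed
  also have "\<dots> = pmult (hcomp n a A) (hcomp n b B) P" by (simp add: pmult_def T'_def)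
  finally show ?thesis .
qed

lemma sum_supp_add:
  fixes A B :: "(nat \<Rightarrow> nat) \<Rightarrow> 'b::comm_monoid_add" and g :: "(nat \<Rightarrow> nat) \<Rightarrow> 'b \<Rightarrow> 'c::comm_monoid_add"
  assumes fA: "finite (supp A)" and fB: "finite (supp B)"
    and g0: "\<And>I. g I 0 = 0" and gadd: "\<And>I x y. g I (x + y) = g I x + g I y"
  shows "(\<Sum>I\<in>supp (\<lambda>J. A J + B J). g I (A I + B I)) = (\<Sum>I\<in>supp A. g I (A I)) + (\<Sum>I\<in>supp B. g I (B I))"
proof -
  define U0 where "U0 = supp A \<union> supp B"
  have fU: "finite U0" using fA fB by (simp add: U0_def)
  have "(\<Sum>I\<in>supp (\<lambda>J. A J + B J). g I (A I + B I)) = (\<Sum>I\<in>U0. g I (A I + B I))"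
    by (rule sum.mono_neutral_left[OF fU]) (auto simp: U0_def supp_def g0)
  also have "\<dots> = (\<Sum>I\<in>U0. g I (A I)) + (\<Sum>I\<in>U0. g I (B I))" by (simp add: gadd sum.distrib)
  also have "(\<Sum>I\<in>U0. g I (A I)) = (\<Sum>I\<in>supp A. g I (A I))"
    by (rule sum.mono_neutral_right[OF fU]) (auto simp: U0_def supp_def g0)
  also have "(\<Sum>I\<in>U0. g I (B I)) = (\<Sum>I\<in>supp B. g I (B I))"
    by (rule sum.mono_neutral_right[OF fU]) (auto simp: U0_def supp_def g0)
  finally show ?thesis .
qed

lemma op_comp_add_left:
  fixes A B C :: "(nat \<Rightarrow> nat) \<Rightarrow> 'k::field"
  assumes "finite (supp A)" "finite (supp B)"
  shows "op_comp \<delta> n (\<lambda>J. A J + B J) C P = op_comp \<delta> n A C P + op_comp \<delta> n B C P"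
  unfolding op_comp_def
  by (rule sum_supp_add[OF assms, where g = "\<lambda>I x. \<Sum>J\<in>supp C. \<Sum>K\<in>{K. is_mindex n K \<and> (\<forall>i<n. K i \<le> I i) \<and> (\<lambda>i. I i - K i + J i) = P}.
         of_nat (mbinom n I K) * x * dpow \<delta> n K (C J)"])
     (simp_all add: distrib_left distrib_right sum.distrib)

lemma funpow_additive:
  fixes f :: "'a::plus \<Rightarrow> 'a"
  assumes f: "\<And>a b. f (a + b) = f a + f b" shows "(f ^^ k) (a + b) = (f ^^ k) a + (f ^^ k) b"
proof (induction k)
  case (Suc k)
  have "(f ^^ Suc k) (a + b) = f ((f ^^ k) a + (f ^^ k) b)" using Suc by simp
  also have "\<dots> = (f ^^ Suc k) a + (f ^^ Suc k) b" using f by simp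
  finally show ?case .
qed simp

lemma dpow_add:
  assumes "commuting_derivations n \<delta>" "m \<le> n"
  shows "dpow \<delta> m K (a + b) = dpow \<delta> m K a + dpow \<delta> m K b"
  using assms(2)
proof (induction m)
  case 0 thus ?case by simp
next
  case (Suc m)
  have "\<And>a b. \<delta> m (a + b) = \<delta> m a + \<delta> m b"
    using assms(1) Suc.prems unfolding commuting_derivations_def is_derivation_def by auto
  thus ?case using Suc by (simp add: funpow_additive)
qed

lemma dpow_zero:
  assumes "commuting_derivations n \<delta>" shows "dpow \<delta> n K 0 = 0"
proof -
  have "dpow \<delta> n K 0 + 0 = dpow \<delta> n K 0 + dpow \<delta> n K 0" using dpow_add[OF assms order_refl, of K 0 0] by simp
  thus ?thesis by (simp only: add_left_cancel)
qed

lemma op_comp_add_right: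
  fixes A B C :: "(nat \<Rightarrow> nat) \<Rightarrow> 'k::field"
  assumes cd: "commuting_derivations n \<delta>" and "finite (supp B)" "finite (supp C)"
  shows "op_comp \<delta> n A (\<lambda>J. B J + C J) P = op_comp \<delta> n A B P + op_comp \<delta> n A C P"
  unfolding op_comp_def sum.distrib[symmetric]
proof (rule sum.cong[OF refl])
  fix I
  show "(\<Sum>J\<in>supp (\<lambda>J. B J + C J). \<Sum>K\<in>{K. is_mindex n K \<and> (\<forall>i<n. K i \<le> I i) \<and> (\<lambda>i. I i - K i + J i) = P}.
         of_nat (mbinom n I K) * A I * dpow \<delta> n K (B J + C J)) =
    (\<Sum>J\<in>supp B. \<Sum>K\<in>{K. is_mindex n K \<and> (\<forall>i<n. K i \<le> I i) \<and> (\<lambda>i. I i - K i + J i) = P}.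
         of_nat (mbinom n I K) * A I * dpow \<delta> n K (B J)) +
    (\<Sum>J\<in>supp C. \<Sum>K\<in>{K. is_mindex n K \<and> (\<forall>i<n. K i \<le> I i) \<and> (\<lambda>i. I i - K i + J i) = P}.
         of_nat (mbinom n I K) * A I * dpow \<delta> n K (C J))"
    by (rule sum_supp_add[OF assms(2,3)])
       (simp_all add: dpow_zero[OF cd] dpow_add[OF cd order_refl] distrib_left sum.distrib)
qed

lemma op_comp_zero_left: "op_comp \<delta> n (\<lambda>_. 0) C P = 0"
  by (simp add: op_comp_def supp_def)

lemma op_comp_zero_right: "op_comp \<delta> n A (\<lambda>_. 0) P = 0"
  by (simp add: op_comp_def supp_def)

lemma pmult_zero_left: "pmult (\<lambda>_. 0) Y = (\<lambda>_. (0::'k::comm_ring))"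
  by (simp add: pmult_def supp_def fun_eq_iff)

lemma pmult_zero_right: "pmult X (\<lambda>_. 0) = (\<lambda>_. (0::'k::comm_ring))"
  by (simp add: pmult_def supp_def fun_eq_iff)

lemma pmult_hom_zero:
  assumes "homogeneous n X a" "homogeneous n Y b" "mdeg n P \<noteq> a + b"
  shows "pmult X Y P = (0::'k::comm_ring)"
  unfolding pmult_def
proof (intro sum.neutral ballI)
  fix I J assume "I \<in> supp X" "J \<in> supp Y"
  hence "mdeg n I = a" "mdeg n J = b" using assms(1,2) unfolding homogeneous_def by auto
  hence "(\<lambda>i. I i + J i) \<noteq> P" using assms(3) mdeg_add by metis
  thus "(if (\<lambda>i. I i + J i) = P then X I * Y J else 0) = 0" by simp
qed

lemma ord_lt_iff:
  assumes "finite (supp X)"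
  shows "ord n X < ereal r \<longleftrightarrow> (\<forall>J\<in>supp X. real (mdeg n J) < r)"
proof (cases "supp X = {}")
  case True thus ?thesis by (simp add: ord_def)
next
  case False
  hence "ord n X = ereal (real (Max (mdeg n ` supp X)))" by (simp add: ord_def)
  moreover have "Max (mdeg n ` supp X) < m \<longleftrightarrow> (\<forall>J\<in>supp X. mdeg n J < m)" for m
    using assms False by (simp add: Max_less_iff)
  moreover have "real (Max (mdeg n ` supp X)) < r \<longleftrightarrow> (\<forall>J\<in>supp X. real (mdeg n J) < r)"
  proof
    assume a: "real (Max (mdeg n ` supp X)) < r"
    show "\<forall>J\<in>supp X. real (mdeg n J) < r"
    proof
      fix J assume "J \<in> supp X"
      hence "mdeg n J \<le> Max (mdeg n ` supp X)" using assms by simp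
      thus "real (mdeg n J) < r" using a by linarith
    qed
  next
    assume a: "\<forall>J\<in>supp X. real (mdeg n J) < r"
    have "Max (mdeg n ` supp X) \<in> mdeg n ` supp X" using assms False by simp
    thus "real (Max (mdeg n ` supp X)) < r" using a by auto
  qed
  ultimately show ?thesis by simp
qed

lemma supp_op_minus: "supp (op_minus A B) \<subseteq> supp A \<union> supp B"
  by (auto simp: supp_def op_minus_def)

lemma finite_bounded_funs: "finite {K::nat\<Rightarrow>nat. (\<forall>i\<ge>m. K i = 0) \<and> (\<forall>i<m. K i \<le> c)}"
proof (induction m)
  case 0
  have "{K::nat\<Rightarrow>nat. (\<forall>i\<ge>0. K i = 0) \<and> (\<forall>i<0. K i \<le> c)} \<subseteq> {\<lambda>_. 0}" by auto
  thus ?case by (rule finite_subset) simp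
next
  case (Suc m)
  let ?S = "{K::nat\<Rightarrow>nat. (\<forall>i\<ge>m. K i = 0) \<and> (\<forall>i<m. K i \<le> c)}"
  have "{K::nat\<Rightarrow>nat. (\<forall>i\<ge>Suc m. K i = 0) \<and> (\<forall>i<Suc m. K i \<le> c)} \<subseteq> (\<lambda>(K,v). K(m := v)) ` (?S \<times> {..c})"
  proof
    fix K :: "nat \<Rightarrow> nat" assume K: "K \<in> {K. (\<forall>i\<ge>Suc m. K i = 0) \<and> (\<forall>i<Suc m. K i \<le> c)}"
    have "K(m := 0) \<in> ?S" using K by (auto simp: not_less_eq_eq le_Suc_eq)
    moreover have "K m \<le> c" using K by auto
    moreover have "K = (K(m := 0))(m := K m)" by simp
    ultimately show "K \<in> (\<lambda>(K,v). K(m := v)) ` (?S \<times> {..c})" by (intro image_eqI[of _ _ "(K(m := 0), K m)"]) auto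
  qed
  moreover have "finite ((\<lambda>(K,v). K(m := v)) ` (?S \<times> {..c}))" using Suc by simp
  ultimately show ?case by (rule finite_subset)
qed

lemma finite_bounded_mindex: "finite {K. is_mindex n K \<and> (\<forall>i<n. K i \<le> c)}"
  by (rule finite_subset[OF _ finite_bounded_funs[of n c]]) (auto simp: is_mindex_def)

lemma supp_op_comp_finite:
  assumes F: "is_op n F" and G: "is_op n G"
  shows "finite (supp (op_comp \<delta> n F G))"
proof -
  define c where "c = (\<Sum>I\<in>supp F. mdeg n I) + (\<Sum>J\<in>supp G. mdeg n J)"
  have fF: "finite (supp F)" and fG: "finite (supp G)" using F G by (auto simp: is_op_def)
  have bnd: "I i \<le> mdeg n I" if "i < n" for I :: "nat \<Rightarrow> nat" and i
    unfolding mdeg_def using that by (intro member_le_sum) auto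
  have sub: "supp (op_comp \<delta> n F G) \<subseteq> {K. is_mindex n K \<and> (\<forall>i<n. K i \<le> c)}"
  proof
    fix P assume "P \<in> supp (op_comp \<delta> n F G)"
    hence "op_comp \<delta> n F G P \<noteq> 0" by (simp add: supp_def)
    then obtain I where I: "I \<in> supp F" and
      "(\<Sum>J\<in>supp G. \<Sum>K\<in>{K. is_mindex n K \<and> (\<forall>i<n. K i \<le> I i) \<and> (\<lambda>i. I i - K i + J i) = P}.
         of_nat (mbinom n I K) * F I * dpow \<delta> n K (G J)) \<noteq> 0"
      unfolding op_comp_def using sum.not_neutral_contains_not_neutral by blast
    then obtain J where J: "J \<in> supp G" and
      "(\<Sum>K\<in>{K. is_mindex n K \<and> (\<forall>i<n. K i \<le> I i) \<and> (\<lambda>i. I i - K i + J i) = P}.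
         of_nat (mbinom n I K) * F I * dpow \<delta> n K (G J)) \<noteq> 0"
      using sum.not_neutral_contains_not_neutral by blast
    then obtain K where K: "is_mindex n K" "\<forall>i<n. K i \<le> I i" "(\<lambda>i. I i - K i + J i) = P"
      using sum.not_neutral_contains_not_neutral by blast
    have mI: "is_mindex n I" and mJ: "is_mindex n J" using F G I J by (auto simp: is_op_def)
    have "is_mindex n P" using K(1,3) mI mJ unfolding is_mindex_def by auto
    moreover have "P i \<le> c" if "i < n" for i
    proof -
      have "P i \<le> I i + J i" using K(3) by auto
      also have "\<dots> \<le> mdeg n I + mdeg n J" using bnd[OF that, of I] bnd[OF that, of J] by simp
      also have "mdeg n I \<le> (\<Sum>I\<in>supp F. mdeg n I)" using fF I by (intro member_le_sum) auto
      also have "mdeg n J \<le> (\<Sum>J\<in>supp G. mdeg n J)" using fG J by (intro member_le_sum) auto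
      finally show ?thesis by (simp add: c_def)
    qed
    ultimately show "P \<in> {K. is_mindex n K \<and> (\<forall>i<n. K i \<le> c)}" by blast
  qed
  show ?thesis by (rule finite_subset[OF sub finite_bounded_mindex])
qed

lemma sym_lemma:
  fixes F S :: "(nat \<Rightarrow> nat) \<Rightarrow> 'k::zero"
  assumes F: "is_op n F" and SF: "Sym n F = S" and S0: "S \<noteq> (\<lambda>_. 0)" and hS: "homogeneous n S a"
  shows "(\<forall>J\<in>supp F. mdeg n J \<le> a) \<and> hcomp n a F = S"
proof -
  obtain J0 where J0: "S J0 \<noteq> 0" using S0 by auto
  have fF: "finite (supp F)" using F by (simp add: is_op_def)
  have ne: "supp F \<noteq> {}"
  proof
    assume "supp F = {}"
    hence "Sym n F = (\<lambda>_. 0)" by (simp add: Sym_def ord_def)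
    thus False using SF S0 by simp
  qed
  define m where "m = Max (mdeg n ` supp F)"
  have ordF: "ord n F = ereal (real m)" using ne by (simp add: ord_def m_def)
  have SymF: "Sym n F J = (if mdeg n J = m then F J else 0)" for J
    by (simp add: Sym_def ordF)
  have "mdeg n J0 = m" using J0 SF SymF[of J0] by (auto split: if_splits)
  moreover have "mdeg n J0 = a" using J0 hS unfolding homogeneous_def supp_def by blast
  ultimately have ma: "m = a" by simp
  have "\<forall>J\<in>supp F. mdeg n J \<le> a" using fF ma m_def by auto
  moreover have "hcomp n a F = S" using SF SymF ma by (auto simp: hcomp_def fun_eq_iff)
  ultimately show ?thesis by blast
qed

lemma hcomp_mpoly: "is_op n A \<Longrightarrow> is_mpoly n (hcomp n a A)"
  by (auto simp: is_op_def is_mpoly_def supp_hcomp)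

lemma hcomp_hom: "homogeneous n (hcomp n a A) a"
  by (auto simp: homogeneous_def supp_hcomp)

lemma hcomp_zero: "hcomp n a (\<lambda>_. 0) = (\<lambda>_. 0)"
  by (simp add: hcomp_def fun_eq_iff)

lemma pdeg_hom: "homogeneous n X a \<Longrightarrow> X \<noteq> (\<lambda>_. 0) \<Longrightarrow> pdeg n X = a"
proof -
  assume h: "homogeneous n X a" "X \<noteq> (\<lambda>_. 0)"
  then obtain J where "X J \<noteq> 0" by auto
  hence "mdeg n ` supp X = {a}" using h(1) unfolding homogeneous_def supp_def by auto
  thus ?thesis by (simp add: pdeg_def)
qed

lemma raw_core:
  fixes S0 S1 S2 b1 b2 :: "(nat \<Rightarrow> nat) \<Rightarrow> 'k::field"
  assumes mp: "is_mpoly n S1" "is_mpoly n S2" "is_mpoly n b1" "is_mpoly n b2"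
    and nz: "S1 \<noteq> (\<lambda>_. 0)" "S2 \<noteq> (\<lambda>_. 0)" "b1 \<noteq> (\<lambda>_. 0)"
    and gcd: "is_gcd n S0 S1 S2"
    and eq: "\<And>P. pmult b1 S2 P + pmult S1 b2 P = 0"
  shows "pdeg n S1 \<le> pdeg n S0 + pdeg n b1"
proof -
  have mS0: "is_mpoly n S0" using gcd by (simp add: is_gcd_def)
  have e: "toU b1 * toU S2 + toU S1 * toU b2 = 0"
  proof (rule poly_mapping_eqI)
    fix M
    have "lk (toU b1 * toU S2 + toU S1 * toU b2) M = lk (toU (pmult b1 S2)) M + lk (toU (pmult S1 b2)) M"
      by (simp add: toU_pmult[OF mp(3,2)] toU_pmult[OF mp(1,4)] Poly_Mapping.lookup_add)
    also have "\<dots> = pmult b1 S2 (lk M) + pmult S1 b2 (lk M)"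
      by (simp add: lookup_toU[OF pmult_mpoly[OF mp(3,2)]] lookup_toU[OF pmult_mpoly[OF mp(1,4)]])
    also have "\<dots> = 0" by (rule eq)
    finally show "lk (toU b1 * toU S2 + toU S1 * toU b2) M = lk 0 M" by simp
  qed
  have nzU: "toU S1 \<noteq> 0" "toU S2 \<noteq> 0" "toU b1 \<noteq> 0"
    using nz toU_zero_iff[OF mp(1)] toU_zero_iff[OF mp(2)] toU_zero_iff[OF mp(3)] by auto
  have d: "toU S0 dvd toU S1" "toU S0 dvd toU S2"
    using gcd pdvd_toU[OF mS0] by (auto simp: is_gcd_def)
  have g: "h dvd toU S0" if h: "inR n h" "h dvd toU S1" "h dvd toU S2" for h
  proof -
    define H where "H = fromU h"
    have H: "is_mpoly n H" "toU H = h" using fromU_mpoly[OF h(1)] toU_fromU[OF h(1)] H_def by auto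
    have "pdvd n H S1" using toU_pdvd[OF H(1) mp(1) nzU(1)] H(2) h(2) by simp
    moreover have "pdvd n H S2" using toU_pdvd[OF H(1) mp(2) nzU(2)] H(2) h(3) by simp
    ultimately have "pdvd n H S0" using gcd H(1) unfolding is_gcd_def by blast
    thus ?thesis using pdvd_toU[OF H(1)] H(2) by blast
  qed
  have "tdeg (toU S1) \<le> tdeg (toU S0) + tdeg (toU b1)"
    by (rule gcd_deg[OF inR_toU[OF mS0] inR_toU[OF mp(1)] inR_toU[OF mp(2)] inR_toU[OF mp(3)] nzU d g e])
  thus ?thesis by (simp only: tdeg_toU[OF mS0] tdeg_toU[OF mp(1)] tdeg_toU[OF mp(3)])
qed

lemma bound_from_ext:
  fixes F F' F'' :: "(nat \<Rightarrow> nat) \<Rightarrow> 'k::ab_group_add"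
  assumes f: "finite (supp F)" "finite (supp F')" "finite (supp F'')"
    and o1: "ord n (op_minus F F') < ereal (real_of_int x)"
    and o2: "ord n (op_minus F F'') < ereal (real_of_int x)"
  shows "\<forall>J\<in>supp (op_minus F'' F'). int (mdeg n J) < x"
proof
  fix J assume J: "J \<in> supp (op_minus F'' F')"
  have f1: "finite (supp (op_minus F F'))" using f by (meson finite_UnI finite_subset supp_op_minus)
  have f2: "finite (supp (op_minus F F''))" using f by (meson finite_UnI finite_subset supp_op_minus)
  have "op_minus F F' J \<noteq> 0 \<or> op_minus F F'' J \<noteq> 0"
    using J by (auto simp: supp_def op_minus_def)
  hence "J \<in> supp (op_minus F F') \<or> J \<in> supp (op_minus F F'')" by (simp add: supp_def)
  hence "real (mdeg n J) < real_of_int x"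
    using o1 o2 ord_lt_iff[OF f1, of n] ord_lt_iff[OF f2, of n] by blast
  thus "int (mdeg n J) < x" by linarith
qed

lemma term_left:
  fixes B F S :: "(nat \<Rightarrow> nat) \<Rightarrow> 'k::field"
  assumes fB: "finite (supp B)" and fF: "finite (supp F)"
    and bB: "\<forall>J\<in>supp B. int (mdeg n J) < e + 1" and bF: "\<forall>J\<in>supp F. mdeg n J \<le> b"
    and hF: "hcomp n b F = S" and T: "int b + e = T" and P: "T \<le> int (mdeg n P)"
  shows "op_comp \<delta> n B F P = pmult (hcomp n (nat e) B) S P"
proof (cases "supp B = {}")
  case True
  hence "B = (\<lambda>_. 0)" by (auto simp: supp_def)
  thus ?thesis by (simp add: op_comp_zero_left hcomp_zero pmult_zero_left)
next
  case False
  then obtain J where "J \<in> supp B" by blast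
  hence e0: "0 \<le> e" using bB by force
  have "op_comp \<delta> n B F P = pmult (hcomp n (nat e) B) (hcomp n b F) P"
    by (rule op_comp_top[OF fB fF]) (use bB bF T P e0 in auto)
  thus ?thesis using hF by simp
qed

lemma term_right:
  fixes B F S :: "(nat \<Rightarrow> nat) \<Rightarrow> 'k::field"
  assumes fB: "finite (supp B)" and fF: "finite (supp F)"
    and bB: "\<forall>J\<in>supp B. int (mdeg n J) < e + 1" and bF: "\<forall>J\<in>supp F. mdeg n J \<le> b"
    and hF: "hcomp n b F = S" and T: "int b + e = T" and P: "T \<le> int (mdeg n P)"
  shows "op_comp \<delta> n F B P = pmult S (hcomp n (nat e) B) P"
proof (cases "supp B = {}")
  case True
  hence "B = (\<lambda>_. 0)" by (auto simp: supp_def)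
  thus ?thesis by (simp add: op_comp_zero_right hcomp_zero pmult_zero_right)
next
  case False
  then obtain J where "J \<in> supp B" by blast
  hence e0: "0 \<le> e" using bB by force
  have "op_comp \<delta> n F B P = pmult (hcomp n b F) (hcomp n (nat e) B) P"
    by (rule op_comp_top[OF fF fB]) (use bB bF T P e0 in auto)
  thus ?thesis using hF by simp
qed

lemma term_cross:
  fixes B1 B2 :: "(nat \<Rightarrow> nat) \<Rightarrow> 'k::field"
  assumes fB: "finite (supp B1)" "finite (supp B2)"
    and bB1: "\<forall>J\<in>supp B1. int (mdeg n J) < e1 + 1" and bB2: "\<forall>J\<in>supp B2. int (mdeg n J) < e2 + 1"
    and P: "e1 + e2 < int (mdeg n P)"
  shows "op_comp \<delta> n B1 B2 P = 0"
proof (cases "supp B1 = {} \<or> supp B2 = {}")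
  case True
  hence "B1 = (\<lambda>_. 0) \<or> B2 = (\<lambda>_. 0)" by (auto simp: supp_def)
  thus ?thesis by (auto simp: op_comp_zero_left op_comp_zero_right)
next
  case False
  then obtain J1 J2 where "J1 \<in> supp B1" "J2 \<in> supp B2" by blast
  hence e0: "0 \<le> e1" "0 \<le> e2" using bB1 bB2 by force+
  have "op_comp \<delta> n B1 B2 P = pmult (hcomp n (nat e1) B1) (hcomp n (nat e2) B2) P"
    by (rule op_comp_top[OF fB]) (use bB1 bB2 P e0 in auto)
  also have "\<dots> = 0" by (rule pmult_hom_zero[OF hcomp_hom hcomp_hom]) (use P e0 in auto)
  finally show ?thesis .
qed

lemma low_left:
  fixes B S :: "(nat \<Rightarrow> nat) \<Rightarrow> 'k::field"
  assumes bB: "\<forall>J\<in>supp B. int (mdeg n J) < e + 1" and hS: "homogeneous n S b"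
    and T: "int b + e = T" and P: "int (mdeg n P) \<noteq> T"
  shows "pmult (hcomp n (nat e) B) S P = 0"
proof (cases "supp B = {}")
  case True
  hence "B = (\<lambda>_. 0)" by (auto simp: supp_def)
  thus ?thesis by (simp add: hcomp_zero pmult_zero_left)
next
  case False
  then obtain J where "J \<in> supp B" by blast
  hence e0: "0 \<le> e" using bB by force
  show ?thesis by (rule pmult_hom_zero[OF hcomp_hom hS]) (use T P e0 in auto)
qed

lemma low_right:
  fixes B S :: "(nat \<Rightarrow> nat) \<Rightarrow> 'k::field"
  assumes bB: "\<forall>J\<in>supp B. int (mdeg n J) < e + 1" and hS: "homogeneous n S b"
    and T: "int b + e = T" and P: "int (mdeg n P) \<noteq> T"
  shows "pmult S (hcomp n (nat e) B) P = 0"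
proof (cases "supp B = {}")
  case True
  hence "B = (\<lambda>_. 0)" by (auto simp: supp_def)
  thus ?thesis by (simp add: hcomp_zero pmult_zero_right)
next
  case False
  then obtain J where "J \<in> supp B" by blast
  hence e0: "0 \<le> e" using bB by force
  show ?thesis by (rule pmult_hom_zero[OF hS hcomp_hom]) (use T P e0 in auto)
qed

lemma final_bound:
  fixes F' F'' :: "(nat \<Rightarrow> nat) \<Rightarrow> 'k::ab_group_add"
  assumes fB: "finite (supp (op_minus F'' F'))"
    and bB: "\<forall>J\<in>supp (op_minus F'' F'). int (mdeg n J) < e + 1"
    and h0: "hcomp n (nat e) (op_minus F'' F') = (\<lambda>_. 0)"
  shows "ord n (op_minus F' F'') < ereal (real_of_int e)"
proof -
  have ss: "supp (op_minus F' F'') = supp (op_minus F'' F')"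
    by (auto simp: supp_def op_minus_def)
  have "\<forall>J\<in>supp (op_minus F'' F'). real (mdeg n J) < real_of_int e"
  proof
    fix J assume J: "J \<in> supp (op_minus F'' F')"
    have "hcomp n (nat e) (op_minus F'' F') J = 0" using h0 by simp
    hence "mdeg n J \<noteq> nat e" using J by (auto simp: hcomp_def supp_def)
    moreover have "int (mdeg n J) < e + 1" using bB J by blast
    ultimately have "int (mdeg n J) < e" by linarith
    thus "real (mdeg n J) < real_of_int e" by linarith
  qed
  thus ?thesis using ord_lt_iff[of "op_minus F' F''" n] fB ss by simp
qed

theorem mainTheorem2:
  fixes \<delta> :: "nat \<Rightarrow> 'k::field \<Rightarrow> 'k" and n d d0 d1 d2 :: nat and t :: int
    and L F1 F2 F1' F2' F1'' F2'' S0 S1 S2 :: "(nat \<Rightarrow> nat) \<Rightarrow> 'k"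
  assumes "commuting_derivations n \<delta>"
    and "is_op n L" and "ord n L = ereal (real d)"
    and "is_mpoly n S1" and "is_mpoly n S2"
    and "homogeneous n S1 d1" and "homogeneous n S2 d2"
    and "Sym n L = pmult S1 S2"
    and "is_gcd n S0 S1 S2" and "pdeg n S0 = d0"
    and "1 \<le> t" and "t \<le> int d - int d0"
    and "partial_factorization \<delta> n L t S1 S2 F1 F2"
    and "partial_factorization \<delta> n L (t - 1) S1 S2 F1' F2'"
    and "is_extension n d d1 d2 t F1 F2 (t - 1) F1' F2'"
    and "partial_factorization \<delta> n L (t - 1) S1 S2 F1'' F2''"
    and "is_extension n d d1 d2 t F1 F2 (t - 1) F1'' F2''"
  shows "ord n (op_minus F1' F1'') < ereal (real_of_int ((t - 1) - (int d - int d1))) \<and>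
         ord n (op_minus F2' F2'') < ereal (real_of_int ((t - 1) - (int d - int d2)))"
proof -
  note A = assms
  have op1: "is_op n F1" "is_op n F2" "Sym n F1 = S1" "Sym n F2 = S2"
    using A(13) by (auto simp: partial_factorization_def)
  have op2: "is_op n F1'" "is_op n F2'" "Sym n F1' = S1" "Sym n F2' = S2"
    and oC': "ord n (op_minus L (op_comp \<delta> n F1' F2')) < ereal (real_of_int (t - 1))"
    using A(14) by (auto simp: partial_factorization_def)
  have op3: "is_op n F1''" "is_op n F2''" "Sym n F1'' = S1" "Sym n F2'' = S2"
    and oC'': "ord n (op_minus L (op_comp \<delta> n F1'' F2'')) < ereal (real_of_int (t - 1))"
    using A(16) by (auto simp: partial_factorization_def)
  have ex1: "ord n (op_minus F1 F1') < ereal (real_of_int (t - (int d - int d1)))"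
    "ord n (op_minus F2 F2') < ereal (real_of_int (t - (int d - int d2)))"
    using A(15) by (auto simp: is_extension_def)
  have ex2: "ord n (op_minus F1 F1'') < ereal (real_of_int (t - (int d - int d1)))"
    "ord n (op_minus F2 F2'') < ereal (real_of_int (t - (int d - int d2)))"
    using A(17) by (auto simp: is_extension_def)
  have finop: "finite (supp X)" if "is_op n X" for X :: "(nat \<Rightarrow> nat) \<Rightarrow> 'k"
    using that by (simp add: is_op_def)
  have suppL: "supp L \<noteq> {}" using A(3) by (auto simp: ord_def)
  have finL: "finite (supp L)" using A(2) by (simp add: is_op_def)
  have dmax: "Max (mdeg n ` supp L) = d" using A(3) suppL by (simp add: ord_def)
  have "Max (mdeg n ` supp L) \<in> mdeg n ` supp L" using finL suppL by simp
  then obtain J0 where J0: "J0 \<in> supp L" "mdeg n J0 = d" using dmax by (metis imageE)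
  have "Sym n L J0 = L J0" using J0(2) A(3) by (simp add: Sym_def)
  hence pJ0: "pmult S1 S2 J0 \<noteq> 0" using J0(1) A(8) by (simp add: supp_def)
  have S1nz: "S1 \<noteq> (\<lambda>_. 0)" using pJ0 pmult_zero_left by metis
  have S2nz: "S2 \<noteq> (\<lambda>_. 0)" using pJ0 pmult_zero_right by metis
  have dsum: "d = d1 + d2" using pmult_hom_zero[OF A(6,7), of J0] pJ0 J0(2) by auto
  have sy1': "(\<forall>J\<in>supp F1'. mdeg n J \<le> d1) \<and> hcomp n d1 F1' = S1" by (rule sym_lemma[OF op2(1,3) S1nz A(6)])
  have sy2': "(\<forall>J\<in>supp F2'. mdeg n J \<le> d2) \<and> hcomp n d2 F2' = S2" by (rule sym_lemma[OF op2(2,4) S2nz A(7)])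
  define e1 where "e1 = (t - 1) - (int d - int d1)"
  define e2 where "e2 = (t - 1) - (int d - int d2)"
  define B1 where "B1 = op_minus F1'' F1'"
  define B2 where "B2 = op_minus F2'' F2'"
  have bB1: "\<forall>J\<in>supp B1. int (mdeg n J) < e1 + 1"
  proof -
    have eq1: "t - (int d - int d1) = e1 + 1" by (simp add: e1_def)
    show ?thesis using bound_from_ext[OF finop[OF op1(1)] finop[OF op2(1)] finop[OF op3(1)] ex1(1) ex2(1)]
      unfolding eq1 B1_def .
  qed
  have bB2: "\<forall>J\<in>supp B2. int (mdeg n J) < e2 + 1"
  proof -
    have eq2: "t - (int d - int d2) = e2 + 1" by (simp add: e2_def)
    show ?thesis using bound_from_ext[OF finop[OF op1(2)] finop[OF op2(2)] finop[OF op3(2)] ex1(2) ex2(2)]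
      unfolding eq2 B2_def .
  qed
  have opB1: "is_op n B1" using op2(1) op3(1) supp_op_minus[of F1'' F1'] unfolding B1_def is_op_def
    by (meson UnE finite_UnI finite_subset subsetD)
  have opB2: "is_op n B2" using op2(2) op3(2) supp_op_minus[of F2'' F2'] unfolding B2_def is_op_def
    by (meson UnE finite_UnI finite_subset subsetD)
  have fB1: "finite (supp B1)" and fB2: "finite (supp B2)" using opB1 opB2 finop by auto
  have F1dec: "F1'' = (\<lambda>J. F1' J + B1 J)" by (simp add: B1_def op_minus_def)
  have F2dec: "F2'' = (\<lambda>J. F2' J + B2 J)" by (simp add: B2_def op_minus_def)
  define b1 where "b1 = hcomp n (nat e1) B1"
  define b2 where "b2 = hcomp n (nat e2) B2"
  have T1: "int d2 + e1 = t - 1" using dsum by (simp add: e1_def)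
  have T2: "int d1 + e2 = t - 1" using dsum by (simp add: e2_def)
  have tlt: "t - 1 < int d" using A(12) by simp
  have key: "pmult b1 S2 P + pmult S1 b2 P = 0" for P
  proof (cases "t - 1 \<le> int (mdeg n P)")
    case True
    have fC': "finite (supp (op_minus L (op_comp \<delta> n F1' F2')))"
      using finL supp_op_comp_finite[OF op2(1,2), of \<delta>] supp_op_minus
      by (meson finite_UnI finite_subset)
    have fC'': "finite (supp (op_minus L (op_comp \<delta> n F1'' F2'')))"
      using finL supp_op_comp_finite[OF op3(1,2), of \<delta>] supp_op_minus
      by (meson finite_UnI finite_subset)
    have "P \<notin> supp (op_minus L (op_comp \<delta> n F1' F2'))"
      using oC' ord_lt_iff[OF fC', of n] True by force
    hence c1: "L P = op_comp \<delta> n F1' F2' P" by (simp add: supp_def op_minus_def)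
    have "P \<notin> supp (op_minus L (op_comp \<delta> n F1'' F2''))"
      using oC'' ord_lt_iff[OF fC'', of n] True by force
    hence c2: "L P = op_comp \<delta> n F1'' F2'' P" by (simp add: supp_def op_minus_def)
    have "op_comp \<delta> n F1'' F2'' P = op_comp \<delta> n F1' F2'' P + op_comp \<delta> n B1 F2'' P"
      unfolding F1dec by (rule op_comp_add_left[OF finop[OF op2(1)] fB1])
    also have "op_comp \<delta> n F1' F2'' P = op_comp \<delta> n F1' F2' P + op_comp \<delta> n F1' B2 P"
      unfolding F2dec by (rule op_comp_add_right[OF A(1) finop[OF op2(2)] fB2])
    also have "op_comp \<delta> n B1 F2'' P = op_comp \<delta> n B1 F2' P + op_comp \<delta> n B1 B2 P"
      unfolding F2dec by (rule op_comp_add_right[OF A(1) finop[OF op2(2)] fB2])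
    finally have sum0: "op_comp \<delta> n F1' B2 P + op_comp \<delta> n B1 F2' P + op_comp \<delta> n B1 B2 P = 0"
      using c1 c2 by (simp add: algebra_simps)
    have t1: "op_comp \<delta> n B1 F2' P = pmult b1 S2 P" unfolding b1_def
      by (rule term_left[OF fB1 finop[OF op2(2)] bB1 _ _ T1 True]) (use sy2' in auto)
    have t2: "op_comp \<delta> n F1' B2 P = pmult S1 b2 P" unfolding b2_def
      by (rule term_right[OF fB2 finop[OF op2(1)] bB2 _ _ T2 True]) (use sy1' in auto)
    have t3: "op_comp \<delta> n B1 B2 P = 0"
      by (rule term_cross[OF fB1 fB2 bB1 bB2]) (use True tlt dsum in \<open>simp add: e1_def e2_def\<close>)
    show ?thesis using sum0 t1 t2 t3 by (simp add: add.commute)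
  next
    case False
    hence "int (mdeg n P) \<noteq> t - 1" by simp
    thus ?thesis unfolding b1_def b2_def
      using low_left[OF bB1 A(7) T1] low_right[OF bB2 A(6) T2] by simp
  qed
  have mb1: "is_mpoly n b1" "is_mpoly n b2" using hcomp_mpoly opB1 opB2 b1_def b2_def by auto
  have b10: "b1 = (\<lambda>_. 0)"
  proof (rule ccontr)
    assume nz: "b1 \<noteq> (\<lambda>_. 0)"
    have "pdeg n S1 \<le> pdeg n S0 + pdeg n b1"
      by (rule raw_core[OF A(4,5) mb1 S1nz S2nz nz A(9) key])
    moreover have "pdeg n S1 = d1" by (rule pdeg_hom[OF A(6) S1nz])
    moreover have "pdeg n b1 = nat e1" unfolding b1_def by (rule pdeg_hom[OF hcomp_hom]) (use nz b1_def in simp)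
    moreover have "B1 \<noteq> (\<lambda>_. 0)" using nz hcomp_zero b1_def by metis
    hence "0 \<le> e1" using bB1 by (force simp: supp_def)
    ultimately show False using A(10,12) by (simp add: e1_def)
  qed
  have b20: "b2 = (\<lambda>_. 0)"
  proof -
    have "pmult S1 b2 = (\<lambda>_. 0)" using key b10 by (simp add: pmult_zero_left fun_eq_iff)
    hence "toU S1 * toU b2 = 0" using toU_pmult[OF A(4) mb1(2)] by (simp add: toU_def supp_def)
    moreover have "toU S1 \<noteq> 0" using toU_zero_iff[OF A(4)] S1nz by simp
    ultimately have "toU b2 = 0" by simp
    thus ?thesis using toU_zero_iff[OF mb1(2)] by simp
  qed
  have "ord n (op_minus F1' F1'') < ereal (real_of_int e1)"
    by (rule final_bound) (use fB1 bB1 b10 in \<open>simp_all add: B1_def b1_def\<close>)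
  moreover have "ord n (op_minus F2' F2'') < ereal (real_of_int e2)"
    by (rule final_bound) (use fB2 bB2 b20 in \<open>simp_all add: B2_def b2_def\<close>)
  ultimately show ?thesis by (simp add: e1_def e2_def)
qed

end
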